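(* There exist constants $\rho_n$ ($n\ge0$) such that the following holds. Let $s,\delta>0$ be such that $1/s$ is an integer and $\delta<s/2$. Then there exists a $C^\infty$ diffeomorphism $A=A_{s,\delta}$ of $[0,1]$ such that: (1) $A=\mathrm{Id}+a$, where $a=a_{s,\delta}$ is a non-negative $C^\infty$ function of period $s$; (2) $A(0)=0$, $A(\delta)=s-\delta$, and $A(s)=s$; (3) $\delta/(2s)\le A'(x)\le 2s/\delta$ for all $x$; (4) for each $n\ge0$, $\|A\|_n\le\rho_n/\delta^{n^2}$, where $\rho_n$ does not depend on $\delta$ and $s$.
   Context: For a $C^n$ diffeomorphism $g$ of $[0,1]$, $\|g\|_n^*=\max|g^{(i)}(x)|$, the maximum over all $x\in[0,1]$ and $0\le i\le n$, and $\|g\|_n=\max\{\|g\|_n^*,\|g^{-1}\|_n^*\}$. *)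

theory Defs
  imports "HOL-Analysis.Analysis"
begin

definition smooth_fun :: "(real \<Rightarrow> real) \<Rightarrow> bool" where
  "smooth_fun f \<longleftrightarrow> (\<forall>n x. (deriv ^^ n) f differentiable (at x))"

definition diffeo01 :: "(real \<Rightarrow> real) \<Rightarrow> (real \<Rightarrow> real) \<Rightarrow> bool" where
  "diffeo01 g h \<longleftrightarrow> smooth_fun g \<and> smooth_fun h \<and>
     (\<forall>x\<in>{0..1}. g x \<in> {0..1} \<and> h (g x) = x) \<and>
     (\<forall>y\<in>{0..1}. h y \<in> {0..1} \<and> g (h y) = y)"

definition cn_star :: "nat \<Rightarrow> (real \<Rightarrow> real) \<Rightarrow> real" where
  "cn_star n g = Sup {\<bar>(deriv ^^ i) g x\<bar> | i x. i \<le> n \<and> x \<in> {0..1}}"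

definition cn_norm :: "nat \<Rightarrow> (real \<Rightarrow> real) \<Rightarrow> (real \<Rightarrow> real) \<Rightarrow> real" where
  "cn_norm n g h = max (cn_star n g) (cn_star n h)"

end

theory Submission
  imports Defs "HOL-Computational_Algebra.Polynomial"
begin

lemma funpow_deriv_Suc: "(deriv ^^ Suc n) f = (deriv ^^ n) (deriv f)"
  by (simp only: funpow_Suc_right o_apply)

lemma smooth_diff_at: "smooth_fun f \<Longrightarrow> (deriv ^^ n) f differentiable (at x)"
  by (simp add: smooth_fun_def)

lemma smooth_DERIV: "smooth_fun f \<Longrightarrow> ((deriv ^^ n) f has_real_derivative (deriv ^^ Suc n) f x) (at x)"
  using DERIV_deriv_iff_real_differentiable smooth_diff_at by simp

lemma smooth_DERIV0: "smooth_fun f \<Longrightarrow> (f has_real_derivative deriv f x) (at x)"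
  using smooth_DERIV[of f 0 x] by simp

lemma smooth_deriv: "smooth_fun f \<Longrightarrow> smooth_fun (deriv f)"
  unfolding smooth_fun_def by (metis funpow_deriv_Suc)

lemma smooth_higher: "smooth_fun f \<Longrightarrow> smooth_fun ((deriv ^^ n) f)"
  unfolding smooth_fun_def by (metis funpow_add o_apply)

lemma smooth_cont: "smooth_fun f \<Longrightarrow> continuous_on S f"
  by (metis DERIV_continuous continuous_at_imp_continuous_on smooth_DERIV0)

lemma smooth_isCont: "smooth_fun f \<Longrightarrow> isCont f x"
  by (metis DERIV_continuous smooth_DERIV0)

lemma smooth_funI:
  assumes "\<And>x. f differentiable (at x)" "smooth_fun (deriv f)"
  shows "smooth_fun f"
  unfolding smooth_fun_def
proof (intro allI)
  fix n x show "(deriv ^^ n) f differentiable (at x)"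
    using assms by (cases n) (auto simp: funpow_deriv_Suc smooth_fun_def simp del: funpow.simps)
qed

lemma DERIV_differentiable: "(f has_real_derivative D) (at x) \<Longrightarrow> f differentiable (at x)"
  using real_differentiable_def by blast

lemma smooth_funI2:
  assumes "\<And>x. (f has_real_derivative f' x) (at x)" "smooth_fun f'"
  shows "smooth_fun f"
proof -
  have "deriv f = f'" using assms(1) by (auto intro!: ext DERIV_imp_deriv)
  then show ?thesis using assms by (metis smooth_funI DERIV_differentiable)
qed

lemma deriv_eqI: "(\<And>x. (f has_real_derivative f' x) (at x)) \<Longrightarrow> deriv f = f'"
  by (auto intro!: ext DERIV_imp_deriv)

lemma higher_deriv_const: "(deriv ^^ n) (\<lambda>x::real. c) = (\<lambda>x. if n = 0 then c else 0)"
    by (induction n arbitrary: c) (auto simp del: funpow.simps simp: funpow_deriv_Suc)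

lemma smooth_const: "smooth_fun (\<lambda>x. c)"
  unfolding smooth_fun_def
proof (intro allI)
  fix n x
  have "(deriv ^^ n) (\<lambda>x::real. c) = (\<lambda>x. if n = 0 then c else 0)"
    by (rule higher_deriv_const)
  then show "(deriv ^^ n) (\<lambda>x::real. c) differentiable (at x)" by simp
qed

lemma higher_deriv_add_real:
  assumes "smooth_fun f" "smooth_fun g"
  shows "(deriv ^^ n) (\<lambda>x. f x + g x) = (\<lambda>x. (deriv ^^ n) f x + (deriv ^^ n) g x)"
  using assms
proof (induction n arbitrary: f g)
  case 0 then show ?case by simp
next
  case (Suc n)
  have "deriv (\<lambda>x. f x + g x) = (\<lambda>x. deriv f x + deriv g x)"
    by (rule deriv_eqI) (auto intro!: DERIV_add smooth_DERIV0 Suc.prems)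
  then show ?case
    using Suc.IH[of "deriv f" "deriv g"] Suc.prems
    by (simp add: funpow_deriv_Suc smooth_deriv del: funpow.simps)
qed

lemma smooth_add: "smooth_fun f \<Longrightarrow> smooth_fun g \<Longrightarrow> smooth_fun (\<lambda>x. f x + g x)"
  unfolding smooth_fun_def[of "\<lambda>x. f x + g x"]
  by (auto simp: higher_deriv_add_real smooth_diff_at)

lemma higher_deriv_cmult_real:
  assumes "smooth_fun f"
  shows "(deriv ^^ n) (\<lambda>x. c * f x) = (\<lambda>x. c * (deriv ^^ n) f x)"
  using assms
proof (induction n arbitrary: f)
  case 0 then show ?case by simp
next
  case (Suc n)
  have "deriv (\<lambda>x. c * f x) = (\<lambda>x. c * deriv f x)"
    by (rule deriv_eqI) (auto intro!: DERIV_cmult smooth_DERIV0 Suc.prems)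
  then show ?case
    using Suc.IH[of "deriv f"] Suc.prems
    by (simp add: funpow_deriv_Suc smooth_deriv del: funpow.simps)
qed

lemma smooth_cmult: "smooth_fun f \<Longrightarrow> smooth_fun (\<lambda>x. c * f x)"
  unfolding smooth_fun_def[of "\<lambda>x. c * f x"]
  by (auto simp: higher_deriv_cmult_real smooth_diff_at)

lemma smooth_minus: "smooth_fun f \<Longrightarrow> smooth_fun (\<lambda>x. - f x)"
  using smooth_cmult[of f "-1"] by simp

lemma smooth_diff: "smooth_fun f \<Longrightarrow> smooth_fun g \<Longrightarrow> smooth_fun (\<lambda>x. f x - g x)"
  using smooth_add[of f "\<lambda>x. - g x"] smooth_minus by simp

lemma higher_deriv_minus_real:
  assumes "smooth_fun f"
  shows "(deriv ^^ n) (\<lambda>x. - f x) = (\<lambda>x. - (deriv ^^ n) f x)"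
  using higher_deriv_cmult_real[OF assms, of n "-1"] by simp

lemma higher_deriv_diff_real:
  assumes "smooth_fun f" "smooth_fun g"
  shows "(deriv ^^ n) (\<lambda>x. f x - g x) = (\<lambda>x. (deriv ^^ n) f x - (deriv ^^ n) g x)"
  using higher_deriv_add_real[OF assms(1) smooth_minus[OF assms(2)], of n]
    higher_deriv_minus_real[OF assms(2)] by simp

lemma smooth_id: "smooth_fun (\<lambda>x. x)"
proof (rule smooth_funI2)
  show "((\<lambda>x. x) has_real_derivative 1) (at x)" for x :: real by (rule DERIV_ident)
qed (rule smooth_const)

lemma Suc_choose: "Suc n choose k = (n choose k) + (if k = 0 then 0 else (n choose (k-1)))"
  by (cases k) simp_all

lemma higher_deriv_mult_real:
  assumes f: "smooth_fun f" and g: "smooth_fun g"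
  shows "(deriv ^^ n) (\<lambda>w. f w * g w) z =
           (\<Sum>i = 0..n. of_nat (n choose i) * (deriv ^^ i) f z * (deriv ^^ (n-i)) g z)"
proof (induction n arbitrary: z)
  case 0 then show ?case by simp
next
  case (Suc n z)
  have *: "\<And>n. ((deriv ^^ n) f has_field_derivative deriv ((deriv ^^ n) f) z) (at z)"
          "\<And>n. ((deriv ^^ n) g has_field_derivative deriv ((deriv ^^ n) g) z) (at z)"
    using smooth_DERIV[OF f] smooth_DERIV[OF g] by auto
  have sumeq: "(\<Sum>i = 0..n.
               of_nat (n choose i) * (deriv ((deriv ^^ i) f) z * (deriv ^^ (n-i)) g z + deriv ((deriv ^^ (n-i)) g) z * (deriv ^^ i) f z)) =
            g z * deriv ((deriv ^^ n) f) z + (\<Sum>i = 0..n. (deriv ^^ i) f z * (of_nat (Suc n choose i) * (deriv ^^ (Suc n - i)) g z))"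
    apply (simp add: Suc_choose algebra_simps sum.distrib)
    apply (subst (4) sum_Suc_reindex)
    apply (auto simp: algebra_simps Suc_diff_le intro: sum.cong)
    done
  have "((deriv ^^ n) (\<lambda>w. f w * g w) has_field_derivative
         (\<Sum>i = 0..Suc n. (Suc n choose i) * (deriv ^^ i) f z * (deriv ^^ (Suc n - i)) g z))
        (at z)"
    apply (rule has_field_derivative_transform_within_open
        [of "\<lambda>w. (\<Sum>i = 0..n. of_nat (n choose i) * (deriv ^^ i) f w * (deriv ^^ (n-i)) g w)" _ _ UNIV])
       apply (simp add: algebra_simps)
       apply (rule derivative_eq_intros | simp)+
           apply (auto intro: DERIV_mult * Suc.IH [symmetric])
    by (metis (no_types, lifting) mult.commute sum.cong sumeq)
  then show ?case
    unfolding funpow.simps o_apply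
    by (simp add: DERIV_imp_deriv)
qed

lemma smooth_mult: assumes f: "smooth_fun f" and g: "smooth_fun g"
  shows "smooth_fun (\<lambda>x. f x * g x)"
  unfolding smooth_fun_def
proof (intro allI)
  fix n x
  have e: "(deriv ^^ n) (\<lambda>w. f w * g w) = (\<lambda>z.
           (\<Sum>i = 0..n. of_nat (n choose i) * (deriv ^^ i) f z * (deriv ^^ (n-i)) g z))"
    by (rule ext, rule higher_deriv_mult_real[OF f g])
  have "((\<lambda>z. (\<Sum>i = 0..n. of_nat (n choose i) * (deriv ^^ i) f z * (deriv ^^ (n-i)) g z))
     has_real_derivative (\<Sum>i = 0..n. of_nat (n choose i) * ((deriv ^^ Suc i) f x * (deriv ^^ (n-i)) g x
       + (deriv ^^ i) f x * (deriv ^^ Suc (n-i)) g x))) (at x)"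
    by (auto intro!: derivative_eq_intros smooth_DERIV f g simp: algebra_simps)
  then show "(deriv ^^ n) (\<lambda>w. f w * g w) differentiable (at x)"
    unfolding e by (rule DERIV_differentiable)
qed

lemma higher_deriv_affine:
  assumes f: "smooth_fun f"
  shows "(deriv ^^ n) (\<lambda>x. f (a*x+b)) = (\<lambda>x. a^n * (deriv ^^ n) f (a*x+b))"
proof (induction n)
  case 0 then show ?case by simp
next
  case (Suc n)
  have "deriv (\<lambda>x. a^n * (deriv ^^ n) f (a*x+b)) = (\<lambda>x. a^Suc n * (deriv ^^ Suc n) f (a*x+b))"
  proof (rule deriv_eqI)
    fix x
    have d: "((\<lambda>x. (deriv ^^ n) f (a*x+b)) has_real_derivative (deriv ^^ Suc n) f (a*x+b) * a) (at x)"
      by (rule DERIV_chain2[OF smooth_DERIV[OF f]]) (auto intro!: derivative_eq_intros)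
    show "((\<lambda>x. a ^ n * (deriv ^^ n) f (a * x + b)) has_real_derivative a ^ Suc n * (deriv ^^ Suc n) f (a * x + b)) (at x)"
      using DERIV_cmult[OF d, of "a^n"] by (simp add: algebra_simps)
  qed
  note e = this
  have "(deriv ^^ Suc n) (\<lambda>x. f (a * x + b)) = deriv ((deriv ^^ n) (\<lambda>x. f (a*x+b)))" by simp
  also have "\<dots> = deriv (\<lambda>x. a^n * (deriv ^^ n) f (a*x+b))" using Suc by simp
  finally show ?case using e by simp
qed

lemma smooth_affine: assumes f: "smooth_fun f" shows "smooth_fun (\<lambda>x. f (a*x+b))"
  unfolding smooth_fun_def
proof (intro allI)
  fix n x
  have "((\<lambda>x. a^n * (deriv ^^ n) f (a*x+b)) has_real_derivative a^n * ((deriv ^^ Suc n) f (a*x+b) * a)) (at x)"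
    by (intro DERIV_cmult DERIV_chain2[OF smooth_DERIV[OF f]]) (auto intro!: derivative_eq_intros)
  then show "(deriv ^^ n) (\<lambda>x. f (a * x + b)) differentiable (at x)"
    unfolding higher_deriv_affine[OF f] by (rule DERIV_differentiable)
qed

lemma higher_deriv_local:
  assumes "open S" "x \<in> S" "\<And>y. y \<in> S \<Longrightarrow> f y = g y"
  shows "(deriv ^^ n) f x = (deriv ^^ n) g x"
  by (rule higher_deriv_cong_ev) (use assms in \<open>auto simp: eventually_nhds\<close>)

lemma smooth_local:
  assumes "\<And>x. \<exists>S h. open S \<and> x \<in> S \<and> smooth_fun h \<and> (\<forall>y\<in>S. f y = h y)"
  shows "smooth_fun f"
  unfolding smooth_fun_def
proof (intro allI)
  fix n x
  obtain S h where S: "open S" "x \<in> S" "smooth_fun h" "\<forall>y\<in>S. f y = h y" using assms by blast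
  have "((deriv ^^ n) h has_real_derivative (deriv ^^ Suc n) h x) (at x)"
    by (rule smooth_DERIV[OF S(3)])
  then have "((deriv ^^ n) f has_real_derivative (deriv ^^ Suc n) h x) (at x)"
    by (rule has_field_derivative_transform_within_open[OF _ S(1,2)])
       (use S in \<open>auto intro!: higher_deriv_local[symmetric]\<close>)
  then show "(deriv ^^ n) f differentiable (at x)" by (rule DERIV_differentiable)
qed

lemma smooth_exp:
  assumes f: "smooth_fun f"
  shows "smooth_fun (\<lambda>x. exp (f x))"
proof -
  have "\<exists>P. smooth_fun P \<and> (deriv ^^ n) (\<lambda>x. exp (f x)) = (\<lambda>x. P x * exp (f x))" for n
  proof (induction n)
    case 0 then show ?case using smooth_const[of 1] by auto
  next
    case (Suc n)
    then obtain P where P: "smooth_fun P" "(deriv ^^ n) (\<lambda>x. exp (f x)) = (\<lambda>x. P x * exp (f x))" by blast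
    have "deriv (\<lambda>x. P x * exp (f x)) = (\<lambda>x. (deriv P x + P x * deriv f x) * exp (f x))"
      by (rule deriv_eqI) (auto intro!: derivative_eq_intros smooth_DERIV0 P f simp: algebra_simps)
    then show ?case using P
      by (intro exI[of _ "\<lambda>x. deriv P x + P x * deriv f x"])
         (auto intro!: smooth_add smooth_mult smooth_deriv f)
  qed
  note * = this
  show ?thesis unfolding smooth_fun_def
  proof (intro allI)
    fix n x
    obtain P where P: "smooth_fun P" "(deriv ^^ n) (\<lambda>x. exp (f x)) = (\<lambda>x. P x * exp (f x))" using * by blast
    have "((\<lambda>x. P x * exp (f x)) has_real_derivative (deriv P x * exp (f x) + P x * (exp (f x) * deriv f x))) (at x)"
      by (auto intro!: derivative_eq_intros smooth_DERIV0 P f)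
    then show "(deriv ^^ n) (\<lambda>x. exp (f x)) differentiable (at x)" unfolding P(2) by (rule DERIV_differentiable)
  qed
qed


lemma antideriv_exists:
  fixes f :: "real \<Rightarrow> real"
  assumes c: "continuous_on UNIV f"
  shows "\<exists>F. \<forall>x. (F has_real_derivative f x) (at x)"
proof -
  define F where "F x = integral {0..x} f - integral {x..0} f" for x
  have int: "f integrable_on {u..v}" for u v
    by (rule integrable_continuous_real) (rule continuous_on_subset[OF c], auto)
  have "(F has_real_derivative f x) (at x)" for x
  proof -
    define a where "a = -(\<bar>x\<bar>+1)"
    define b where "b = \<bar>x\<bar>+1"
    have ab: "a < x" "x < b" by (auto simp: a_def b_def)
    have eq: "integral {a..y} f - integral {a..0} f = F y" if "y \<in> {a<..<b}" for y
    proof (cases "0 \<le> y")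
      case True
      have "integral {a..0} f + integral {0..y} f = integral {a..y} f"
        using Henstock_Kurzweil_Integration.integral_combine[where a=a and c=0 and b=y and f=f] True that int by (auto simp: a_def)
      moreover have "integral {y..0} f = 0" using True by (cases "y = 0") auto
      ultimately show ?thesis by (simp add: F_def)
    next
      case False
      have "integral {a..y} f + integral {y..0} f = integral {a..0} f"
        using Henstock_Kurzweil_Integration.integral_combine[where a=a and c=y and b=0 and f=f] False that int by (auto simp: a_def)
      moreover have "integral {0..y} f = 0" using False by auto
      ultimately show ?thesis by (simp add: F_def)
    qed
    have "((\<lambda>y. integral {a..y} f) has_real_derivative f x) (at x within {a..b})"
      by (rule integral_has_real_derivative) (use ab c in \<open>auto intro: continuous_on_subset\<close>)
    then have "((\<lambda>y. integral {a..y} f) has_real_derivative f x) (at x)"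
      using at_within_Icc_at[OF ab] by simp
    then have "((\<lambda>y. integral {a..y} f - integral {a..0} f) has_real_derivative f x) (at x)"
      by (auto intro!: derivative_eq_intros)
    then show ?thesis
      by (rule has_field_derivative_transform_within_open[of _ _ _ "{a<..<b}"]) (use ab eq in auto)
  qed
  then show ?thesis by blast
qed

lemma antideriv_exists0:
  fixes f :: "real \<Rightarrow> real"
  assumes c: "continuous_on UNIV f"
  shows "\<exists>F. F 0 = 0 \<and> (\<forall>x. (F has_real_derivative f x) (at x))"
proof -
  obtain F where F: "\<forall>x. (F has_real_derivative f x) (at x)" using antideriv_exists[OF c] by blast
  have "((\<lambda>x. F x - F 0) has_real_derivative f x) (at x)" for x
    using F by (auto intro!: derivative_eq_intros)
  then show ?thesis by (intro exI[of _ "\<lambda>x. F x - F 0"]) auto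
qed

lemma deriv_le_integrate:
  fixes F H f h :: "real \<Rightarrow> real"
  assumes "a \<le> b" "\<And>x. x\<in>{a..b} \<Longrightarrow> (F has_real_derivative f x) (at x)"
    "\<And>x. x\<in>{a..b} \<Longrightarrow> (H has_real_derivative h x) (at x)"
    "\<And>x. x\<in>{a..b} \<Longrightarrow> f x \<le> h x"
  shows "F b - F a \<le> H b - H a"
proof -
  have "(\<lambda>x. H x - F x) a \<le> (\<lambda>x. H x - F x) b"
    by (rule deriv_nonneg_imp_mono[of a b _ "\<lambda>x. h x - f x"])
       (use assms in \<open>auto intro!: derivative_eq_intros\<close>)
  then show ?thesis by simp
qed

lemma deriv_eq_integrate:
  fixes F H f :: "real \<Rightarrow> real"
  assumes "a \<le> b" "\<And>x. x\<in>{a..b} \<Longrightarrow> (F has_real_derivative f x) (at x)"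
    "\<And>x. x\<in>{a..b} \<Longrightarrow> (H has_real_derivative f x) (at x)"
  shows "F b - F a = H b - H a"
  using deriv_le_integrate[OF assms(1,2,3)] deriv_le_integrate[OF assms(1,3,2)] by auto

definition f0 :: "real \<Rightarrow> real" where "f0 x = (if 0 < x then exp (- inverse x) else 0)"

definition hp :: "real poly \<Rightarrow> real \<Rightarrow> real" where
  "hp p x = (if 0 < x then poly p (inverse x) * exp (- inverse x) else 0)"

definition nextp :: "real poly \<Rightarrow> real poly" where "nextp p = [:0,0,1:] * (p - pderiv p)"

lemma poly_div_exp_0: fixes p :: "real poly" shows "((\<lambda>t. poly p t / exp t) \<longlongrightarrow> 0) at_top"
proof -
  have lim: "((\<lambda>t. t ^ i / exp t) \<longlongrightarrow> (0::real)) at_top" for i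
    by (rule tendsto_power_div_exp_0)
  have "((\<lambda>t. \<Sum>i\<le>degree p. coeff p i * (t ^ i / exp t)) \<longlongrightarrow> (\<Sum>i\<le>degree p. coeff p i * 0)) at_top"
    by (intro tendsto_sum tendsto_mult tendsto_const lim)
  then show ?thesis by (simp add: poly_altdef sum_divide_distrib)
qed

lemma hp_DERIV: "(hp p has_real_derivative hp (nextp p) x) (at x)"
proof (cases "0 < x")
  case True
  have d1: "((\<lambda>x. poly p (inverse x)) has_real_derivative poly (pderiv p) (inverse x) * (- (inverse x ^ 2))) (at x)"
    using DERIV_chain2[OF poly_DERIV DERIV_inverse[of x UNIV]] True by (simp add: power2_eq_square)
  have d2: "((\<lambda>x. exp (- inverse x)) has_real_derivative exp (- inverse x) * (inverse x ^ 2)) (at x)"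
    using DERIV_fun_exp[OF DERIV_minus[OF DERIV_inverse[of x UNIV]]] True by (simp add: power2_eq_square)
  have d: "((\<lambda>x. poly p (inverse x) * exp (- inverse x)) has_real_derivative
     (poly (pderiv p) (inverse x) * (- (inverse x ^ 2))) * exp (- inverse x)
       + poly p (inverse x) * (exp (- inverse x) * (inverse x ^ 2))) (at x)"
    using DERIV_mult[OF d1 d2] by (simp add: algebra_simps)
  have "poly p (inverse x) * (exp (- inverse x) * (inverse x ^ 2)) + (poly (pderiv p) (inverse x) * (- (inverse x ^ 2))) * exp (- inverse x)
     = poly (nextp p) (inverse x) * exp (- inverse x)"
    by (simp add: nextp_def algebra_simps power2_eq_square)
  with d have "((\<lambda>x. poly p (inverse x) * exp (- inverse x)) has_real_derivative hp (nextp p) x) (at x)"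
    using True by (simp add: hp_def algebra_simps)
  then show ?thesis
    by (rule has_field_derivative_transform_within_open[of _ _ _ "{0<..}"]) (use True in \<open>auto simp: hp_def\<close>)
next
  case False
  show ?thesis
  proof (cases "x < 0")
    case True
    have "((\<lambda>x. 0) has_real_derivative 0) (at x)" by simp
    then have "(hp p has_real_derivative 0) (at x)"
      by (rule has_field_derivative_transform_within_open[of _ _ _ "{..<0}"]) (use True in \<open>auto simp: hp_def\<close>)
    then show ?thesis using True by (simp add: hp_def)
  next
    case False
    with \<open>\<not> 0 < x\<close> have x0: "x = 0" by simp
    have "((\<lambda>y. (hp p y - hp p 0) / (y - 0)) \<longlongrightarrow> 0) (at 0)"
    proof (rule filterlim_split_at)
      have "eventually (\<lambda>y. 0 = (hp p y - hp p 0) / (y - 0)) (at_left (0::real))"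
        unfolding eventually_at_left_field by (intro exI[of _ "-1"]) (auto simp: hp_def)
      then show "((\<lambda>y. (hp p y - hp p 0) / (y - 0)) \<longlongrightarrow> 0) (at_left 0)"
        by (rule Lim_transform_eventually[OF tendsto_const])
    next
      have lim: "((\<lambda>y. poly (pCons 0 p) (inverse y) / exp (inverse y)) \<longlongrightarrow> 0) (at_right 0)"
        by (rule filterlim_compose[OF poly_div_exp_0 filterlim_inverse_at_top_right])
      have "eventually (\<lambda>y. poly (pCons 0 p) (inverse y) / exp (inverse y) = (hp p y - hp p 0) / (y - 0)) (at_right (0::real))"
        unfolding eventually_at_right_field by (intro exI[of _ "1"])
          (auto simp: hp_def exp_minus field_simps)
      then show "((\<lambda>y. (hp p y - hp p 0) / (y - 0)) \<longlongrightarrow> 0) (at_right 0)"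
        by (rule Lim_transform_eventually[OF lim])
    qed
    then have "(hp p has_real_derivative 0) (at 0)"
      by (simp add: has_field_derivative_iff)
    then show ?thesis using x0 by (simp add: hp_def)
  qed
qed

lemma f0_hp: "f0 = hp 1" by (auto simp: f0_def hp_def fun_eq_iff)

lemma f0_higher: "(deriv ^^ n) f0 = hp ((nextp ^^ n) 1)"
proof (induction n)
  case 0 then show ?case by (simp add: f0_hp)
next
  case (Suc n)
  then show ?case by (simp add: deriv_eqI[OF hp_DERIV])
qed

lemma f0_smooth: "smooth_fun f0"
  unfolding smooth_fun_def f0_higher using hp_DERIV DERIV_differentiable by blast

lemma f0_nonneg: "f0 x \<ge> 0" by (simp add: f0_def)
lemma f0_pos: "0 < x \<Longrightarrow> f0 x > 0" by (simp add: f0_def)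
lemma f0_zero: "x \<le> 0 \<Longrightarrow> f0 x = 0" by (simp add: f0_def)

definition bmp :: "real \<Rightarrow> real" where "bmp x = f0 x * f0 (1 - x)"

lemma bmp_smooth: "smooth_fun bmp"
proof -
  have "smooth_fun (\<lambda>x. f0 ((-1) * x + 1))" by (rule smooth_affine[OF f0_smooth])
  then have "smooth_fun (\<lambda>x. f0 (1 - x))" by simp
  then show ?thesis unfolding bmp_def[abs_def] by (intro smooth_mult f0_smooth)
qed

lemma bmp_nonneg: "bmp x \<ge> 0" by (simp add: bmp_def f0_nonneg)
lemma bmp_pos: "0 < x \<Longrightarrow> x < 1 \<Longrightarrow> bmp x > 0" by (simp add: bmp_def f0_pos)
lemma bmp_zero: "x \<le> 0 \<or> 1 \<le> x \<Longrightarrow> bmp x = 0" by (auto simp: bmp_def f0_zero)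

definition Psi0 :: "real \<Rightarrow> real" where
  "Psi0 = (SOME F. F 0 = 0 \<and> (\<forall>x. (F has_real_derivative bmp x) (at x)))"

lemma Psi0: "Psi0 0 = 0" "\<And>x. (Psi0 has_real_derivative bmp x) (at x)"
proof -
  have "\<exists>F. F 0 = 0 \<and> (\<forall>x. (F has_real_derivative bmp x) (at x))"
    by (rule antideriv_exists0) (rule smooth_cont[OF bmp_smooth])
  then have "Psi0 0 = 0 \<and> (\<forall>x. (Psi0 has_real_derivative bmp x) (at x))"
    unfolding Psi0_def by (rule someI_ex)
  then show "Psi0 0 = 0" "\<And>x. (Psi0 has_real_derivative bmp x) (at x)" by auto
qed

lemma Psi0_smooth: "smooth_fun Psi0"
  by (rule smooth_funI2[OF Psi0(2) bmp_smooth])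

lemma Psi0_mono: "x \<le> y \<Longrightarrow> Psi0 x \<le> Psi0 y"
  by (rule deriv_nonneg_imp_mono[OF Psi0(2)]) (auto simp: bmp_nonneg)

lemma Psi0_left: "x \<le> 0 \<Longrightarrow> Psi0 x = 0"
proof -
  assume x: "x \<le> 0"
  have "Psi0 0 - Psi0 x = (\<lambda>_. 0) 0 - (\<lambda>_. 0) x"
  proof (rule deriv_eq_integrate[OF x])
    show "((\<lambda>_. 0) has_real_derivative bmp y) (at y)" if "y \<in> {x..0}" for y
      using that bmp_zero[of y] by simp
  qed (rule Psi0(2))
  then show ?thesis using Psi0(1) by simp
qed

lemma Psi0_right: "1 \<le> x \<Longrightarrow> Psi0 x = Psi0 1"
proof -
  assume x: "1 \<le> x"
  have "Psi0 x - Psi0 1 = (\<lambda>_. 0) x - (\<lambda>_. 0) 1"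
  proof (rule deriv_eq_integrate[OF x])
    show "((\<lambda>_. 0) has_real_derivative bmp y) (at y)" if "y \<in> {1..x}" for y
      using that bmp_zero[of y] by simp
  qed (rule Psi0(2))
  then show ?thesis by simp
qed

lemma Psi0_one_pos: "Psi0 1 > 0"
proof -
  obtain z where z: "0 < z" "z < 1" "Psi0 1 - Psi0 0 = (1 - 0) * bmp z"
    using MVT2[of 0 1 Psi0 bmp] Psi0(2) by auto
  then show ?thesis using bmp_pos[of z] Psi0(1) by simp
qed

definition psi :: "real \<Rightarrow> real" where "psi x = Psi0 x / Psi0 1"

lemma psi_smooth: "smooth_fun psi"
  using smooth_cmult[OF Psi0_smooth, of "inverse (Psi0 1)"]
  unfolding psi_def[abs_def] by (simp add: divide_inverse mult.commute)

lemma psi_left: "x \<le> 0 \<Longrightarrow> psi x = 0" by (simp add: psi_def Psi0_left)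
lemma psi_right: "1 \<le> x \<Longrightarrow> psi x = 1" using Psi0_one_pos Psi0_right[of x] by (simp add: psi_def)
lemma psi_nonneg: "psi x \<ge> 0"
  using Psi0_one_pos Psi0_mono[of 0 x] Psi0_left[of x] Psi0(1)
  by (cases "x \<le> 0") (auto simp: psi_def)
lemma psi_le1: "psi x \<le> 1"
  using Psi0_one_pos Psi0_mono[of x 1] Psi0_right[of x]
  by (cases "x \<le> 1") (auto simp: psi_def)

lemma psi_deriv_bound: "\<exists>c. \<forall>i u. \<bar>(deriv ^^ i) psi u\<bar> \<le> c i"
proof -
  have "\<exists>c. \<forall>u. \<bar>(deriv ^^ i) psi u\<bar> \<le> c" for i
  proof -
    have "compact ((deriv ^^ i) psi ` {0..1})"
      by (rule compact_continuous_image) (auto intro: smooth_cont smooth_higher psi_smooth)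
    then obtain B where B: "\<forall>y\<in>(deriv ^^ i) psi ` {0..1}. norm y \<le> B"
      using compact_imp_bounded bounded_iff by metis
    have "\<bar>(deriv ^^ i) psi u\<bar> \<le> max B 1" for u
    proof (cases "u \<in> {0..1}")
      case True
      then have "norm ((deriv ^^ i) psi u) \<le> B" using B by blast
      then show ?thesis by simp
    next
      case False
      show ?thesis
      proof (cases i)
        case 0 then show ?thesis using psi_nonneg[of u] psi_le1[of u] by auto
      next
        case (Suc j)
        show ?thesis
        proof (cases "u < 0")
          case True
          have "(deriv ^^ i) psi u = (deriv ^^ i) (\<lambda>_. 0) u"
            by (rule higher_deriv_local[of "{..<0}"]) (use True in \<open>auto simp: psi_left\<close>)
          then show ?thesis using Suc by (simp add: higher_deriv_const)
        next
          case False
          with \<open>u \<notin> {0..1}\<close> have u: "1 < u" by auto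
          have "(deriv ^^ i) psi u = (deriv ^^ i) (\<lambda>_. 1) u"
            by (rule higher_deriv_local[of "{1<..}"]) (use u in \<open>auto simp: psi_right\<close>)
          then show ?thesis using Suc by (simp add: higher_deriv_const)
        qed
      qed
    qed
    then show ?thesis by blast
  qed
  then have "\<forall>i. \<exists>c. \<forall>u. \<bar>(deriv ^^ i) psi u\<bar> \<le> c" by blast
  then obtain c where "\<forall>i. \<forall>u. \<bar>(deriv ^^ i) psi u\<bar> \<le> c i" by (auto dest!: choice)
  then show ?thesis by blast
qed

definition R :: "real \<Rightarrow> real" where
  "R = (SOME F. F 0 = 0 \<and> (\<forall>x. (F has_real_derivative psi x) (at x)))"

lemma R: "R 0 = 0" "\<And>x. (R has_real_derivative psi x) (at x)"
proof -
  have "\<exists>F. F 0 = 0 \<and> (\<forall>x. (F has_real_derivative psi x) (at x))"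
    by (rule antideriv_exists0) (rule smooth_cont[OF psi_smooth])
  then have "R 0 = 0 \<and> (\<forall>x. (R has_real_derivative psi x) (at x))"
    unfolding R_def by (rule someI_ex)
  then show "R 0 = 0" "\<And>x. (R has_real_derivative psi x) (at x)" by auto
qed

lemma R_smooth: "smooth_fun R"
  by (rule smooth_funI2[OF R(2) psi_smooth])

lemma deriv_R: "deriv R = psi" by (rule deriv_eqI[OF R(2)])

lemma R_higher: "(deriv ^^ Suc i) R = (deriv ^^ i) psi"
  by (simp only: funpow_deriv_Suc deriv_R)

lemma R_left: "x \<le> 0 \<Longrightarrow> R x = 0"
proof -
  assume x: "x \<le> 0"
  have "R 0 - R x = (\<lambda>_. 0) 0 - (\<lambda>_. 0) x"
  proof (rule deriv_eq_integrate[OF x])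
    show "((\<lambda>_. 0) has_real_derivative psi y) (at y)" if "y \<in> {x..0}" for y
      using that psi_left[of y] by simp
  qed (rule R(2))
  then show ?thesis using R(1) by simp
qed

lemma R_diff: "b \<le> a \<Longrightarrow> 0 \<le> R a - R b \<and> R a - R b \<le> a - b"
proof -
  assume ab: "b \<le> a"
  have "(\<lambda>_. 0) a - (\<lambda>_. 0) b \<le> R a - R b"
    by (rule deriv_le_integrate[OF ab, of _ "\<lambda>_. 0" _ psi]) (auto intro: R(2) simp: psi_nonneg)
  moreover have "R a - R b \<le> (\<lambda>x. x) a - (\<lambda>x. x) b"
    by (rule deriv_le_integrate[OF ab, of _ psi _ "\<lambda>_. 1"]) (auto intro: R(2) simp: psi_le1)
  ultimately show ?thesis by simp
qed

lemma R_right: "1 \<le> x \<Longrightarrow> R x = x - (1 - R 1)"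
proof -
  assume x: "1 \<le> x"
  have "R x - R 1 = (\<lambda>x. x) x - (\<lambda>x. x) 1"
  proof (rule deriv_eq_integrate[OF x])
    show "((\<lambda>x. x) has_real_derivative psi y) (at y)" if "y \<in> {1..x}" for y
      using that psi_right[of y] by simp
  qed (rule R(2))
  then show ?thesis by simp
qed

lemma R_ge: "R u \<ge> u - 1"
proof (cases "u \<le> 1")
  case True
  then show ?thesis
  proof (cases "u \<le> 0")
    case True then show ?thesis by (simp add: R_left)
  next
    case False then show ?thesis using R_diff[of 0 u] R(1) True by simp
  qed
next
  case False
  then show ?thesis using R_right[of u] R_diff[of 0 1] R(1) by simp
qed

lemma R_le: "0 \<le> u \<Longrightarrow> R u \<le> u"
  using R_diff[of 0 u] R(1) by simp

lemma R_diff2: "0 \<le> b \<Longrightarrow> b \<le> a \<Longrightarrow> R a - R b \<ge> a - b - 1"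
  using R_ge[of a] R_le[of b] by simp

lemma abs_mult_le: "\<bar>a\<bar> \<le> (A::real) \<Longrightarrow> \<bar>b\<bar> \<le> B \<Longrightarrow> \<bar>a * b\<bar> \<le> A * B"
  by (simp add: abs_mult mult_mono')

lemma deriv_exp_comp: "smooth_fun \<phi> \<Longrightarrow> deriv (\<lambda>x. exp (\<phi> x)) = (\<lambda>x. deriv \<phi> x * exp (\<phi> x))"
  by (rule deriv_eqI) (use DERIV_fun_exp[OF smooth_DERIV0] in \<open>auto simp: mult.commute\<close>)

definition exp_hyp :: "(nat \<Rightarrow> real) \<Rightarrow> (real \<Rightarrow> real) \<Rightarrow> real \<Rightarrow> bool" where
  "exp_hyp D \<phi> K \<longleftrightarrow> smooth_fun \<phi> \<and> 0 \<le> K \<and> (\<forall>i y. \<bar>(deriv ^^ Suc i) \<phi> y\<bar> \<le> D (Suc i) * K ^ Suc i)"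

lemma exp_rel_bound_ex:
  "\<exists>c. \<forall>\<phi> K x. exp_hyp D \<phi> K \<longrightarrow>
          \<bar>(deriv ^^ j) (\<lambda>x. exp (\<phi> x)) x\<bar> \<le> c * K ^ j * exp (\<phi> x)"
proof (induction j rule: less_induct)
  case (less j)
  show ?case
  proof (cases j)
    case 0 then show ?thesis by (intro exI[of _ 1]) auto
  next
    case (Suc m)
    have "\<forall>i\<in>{..m}. \<exists>c. \<forall>\<phi> K x. exp_hyp D \<phi> K \<longrightarrow>
          \<bar>(deriv ^^ (m - i)) (\<lambda>x. exp (\<phi> x)) x\<bar> \<le> c * K ^ (m - i) * exp (\<phi> x)"
      using less Suc by auto
    then obtain cc where cc: "\<forall>i\<in>{..m}. \<forall>\<phi> K x. exp_hyp D \<phi> K \<longrightarrow>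
          \<bar>(deriv ^^ (m - i)) (\<lambda>x. exp (\<phi> x)) x\<bar> \<le> cc i * K ^ (m - i) * exp (\<phi> x)"
      by (metis bchoice)
    define c where "c = (\<Sum>i=0..m. real (m choose i) * (D (Suc i) * cc i))"
    have "\<bar>(deriv ^^ j) (\<lambda>x. exp (\<phi> x)) x\<bar> \<le> c * K ^ j * exp (\<phi> x)" if h: "exp_hyp D \<phi> K" for \<phi> K x
    proof -
      have sm: "smooth_fun \<phi>" and K: "0 \<le> K" and Db: "\<And>i y. \<bar>(deriv ^^ Suc i) \<phi> y\<bar> \<le> D (Suc i) * K ^ Suc i"
        using h by (auto simp: exp_hyp_def)
      have smE: "smooth_fun (\<lambda>x. exp (\<phi> x))" by (rule smooth_exp[OF sm])
      have "(deriv ^^ j) (\<lambda>x. exp (\<phi> x)) x = (deriv ^^ m) (\<lambda>x. deriv \<phi> x * exp (\<phi> x)) x"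
        using Suc by (simp only: funpow_deriv_Suc deriv_exp_comp[OF sm])
      also have "\<dots> = (\<Sum>i=0..m. real (m choose i) * ((deriv ^^ Suc i) \<phi> x * (deriv ^^ (m - i)) (\<lambda>x. exp (\<phi> x)) x))"
        by (subst higher_deriv_mult_real[OF smooth_deriv[OF sm] smE])
           (simp add: funpow_deriv_Suc mult.assoc del: funpow.simps)
      finally have e: "(deriv ^^ j) (\<lambda>x. exp (\<phi> x)) x = \<dots>" .
      have t: "\<bar>real (m choose i) * ((deriv ^^ Suc i) \<phi> x * (deriv ^^ (m - i)) (\<lambda>x. exp (\<phi> x)) x)\<bar>
          \<le> real (m choose i) * (D (Suc i) * cc i) * (K ^ j * exp (\<phi> x))" if i: "i \<in> {0..m}" for i
      proof -
        have "\<bar>(deriv ^^ Suc i) \<phi> x * (deriv ^^ (m - i)) (\<lambda>x. exp (\<phi> x)) x\<bar>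
            \<le> (D (Suc i) * K ^ Suc i) * (cc i * K ^ (m - i) * exp (\<phi> x))"
          by (rule abs_mult_le[OF Db]) (use cc i h in auto)
        also have "\<dots> = (D (Suc i) * cc i) * ((K ^ Suc i * K ^ (m - i)) * exp (\<phi> x))"
          by (simp add: algebra_simps)
        also have "K ^ Suc i * K ^ (m - i) = K ^ j"
          using i Suc by (simp flip: power_add)
        finally show ?thesis by (simp add: abs_mult mult.assoc mult_left_mono)
      qed
      have "\<bar>(deriv ^^ j) (\<lambda>x. exp (\<phi> x)) x\<bar> \<le> (\<Sum>i=0..m. \<bar>real (m choose i) * ((deriv ^^ Suc i) \<phi> x * (deriv ^^ (m - i)) (\<lambda>x. exp (\<phi> x)) x)\<bar>)"
        unfolding e by (rule sum_abs)
      also have "\<dots> \<le> (\<Sum>i=0..m. real (m choose i) * (D (Suc i) * cc i) * (K ^ j * exp (\<phi> x)))"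
        by (rule sum_mono) (rule t)
      also have "\<dots> = c * K ^ j * exp (\<phi> x)"
        by (simp add: c_def sum_distrib_right mult.assoc)
      finally show ?thesis .
    qed
    then show ?thesis by blast
  qed
qed

lemma exp_rel_bound:
  "\<exists>C. \<forall>j \<phi> K x. exp_hyp D \<phi> K \<longrightarrow>
          \<bar>(deriv ^^ j) (\<lambda>x. exp (\<phi> x)) x\<bar> \<le> C j * K ^ j * exp (\<phi> x)"
proof -
  have "\<forall>j. \<exists>c. \<forall>\<phi> K x. exp_hyp D \<phi> K \<longrightarrow>
          \<bar>(deriv ^^ j) (\<lambda>x. exp (\<phi> x)) x\<bar> \<le> c * K ^ j * exp (\<phi> x)"
    using exp_rel_bound_ex by blast
  then show ?thesis by (auto dest!: choice)
qed

fun Qf :: "(real \<Rightarrow> real) \<Rightarrow> nat \<Rightarrow> real \<Rightarrow> real" where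
  "Qf V 0 = V" | "Qf V (Suc n) = (\<lambda>x. deriv (Qf V n) x * V x)"

fun CQ :: "(nat \<Rightarrow> real) \<Rightarrow> nat \<Rightarrow> nat \<Rightarrow> real" where
  "CQ C 0 j = C j"
| "CQ C (Suc n) j = (\<Sum>i=0..j. real (j choose i) * (CQ C n (Suc i) * C (j - i)))"

lemma Qf_smooth: "smooth_fun V \<Longrightarrow> smooth_fun (Qf V n)"
  by (induction n) (auto intro!: smooth_mult smooth_deriv)

lemma Qf_bound:
  assumes V: "smooth_fun V" "\<And>x. 0 \<le> V x" and K: "0 \<le> K"
    and b: "\<And>j x. \<bar>(deriv ^^ j) V x\<bar> \<le> C j * K ^ j * V x"
  shows "\<bar>(deriv ^^ j) (Qf V n) x\<bar> \<le> CQ C n j * K ^ (n + j) * V x ^ Suc n"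
proof (induction n arbitrary: j x)
  case 0 then show ?case using b by simp
next
  case (Suc n)
  have e: "(deriv ^^ j) (Qf V (Suc n)) x
      = (\<Sum>i=0..j. real (j choose i) * ((deriv ^^ Suc i) (Qf V n) x * (deriv ^^ (j - i)) V x))"
    by (simp only: Qf.simps, subst higher_deriv_mult_real[OF smooth_deriv[OF Qf_smooth[OF V(1)]] V(1)])
       (simp add: funpow_deriv_Suc mult.assoc del: funpow.simps)
  have t: "\<bar>real (j choose i) * ((deriv ^^ Suc i) (Qf V n) x * (deriv ^^ (j - i)) V x)\<bar>
      \<le> real (j choose i) * (CQ C n (Suc i) * C (j - i)) * (K ^ (Suc n + j) * V x ^ Suc (Suc n))"
    if i: "i \<in> {0..j}" for i
  proof -
    have "\<bar>(deriv ^^ Suc i) (Qf V n) x * (deriv ^^ (j - i)) V x\<bar>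
        \<le> (CQ C n (Suc i) * K ^ (n + Suc i) * V x ^ Suc n) * (C (j - i) * K ^ (j - i) * V x)"
      by (rule abs_mult_le[OF Suc.IH b])
    also have "\<dots> = (CQ C n (Suc i) * C (j - i)) * ((K ^ (n + Suc i) * K ^ (j - i)) * (V x ^ Suc n * V x))"
      by (simp add: algebra_simps)
    also have "K ^ (n + Suc i) * K ^ (j - i) = K ^ (Suc n + j)"
      using i by (simp flip: power_add)
    also have "V x ^ Suc n * V x = V x ^ Suc (Suc n)" by (simp add: mult.commute)
    finally show ?thesis by (simp add: abs_mult mult.assoc mult_left_mono)
  qed
  have "\<bar>(deriv ^^ j) (Qf V (Suc n)) x\<bar> \<le> (\<Sum>i=0..j. \<bar>real (j choose i) * ((deriv ^^ Suc i) (Qf V n) x * (deriv ^^ (j - i)) V x)\<bar>)"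
    unfolding e by (rule sum_abs)
  also have "\<dots> \<le> (\<Sum>i=0..j. real (j choose i) * (CQ C n (Suc i) * C (j - i)) * (K ^ (Suc n + j) * V x ^ Suc (Suc n)))"
    by (rule sum_mono) (rule t)
  also have "\<dots> = CQ C (Suc n) j * K ^ (Suc n + j) * V x ^ Suc (Suc n)"
    by (simp add: sum_distrib_right mult.assoc)
  finally show ?case .
qed

lemma inverse_smooth:
  fixes A g E V :: "real \<Rightarrow> real"
  assumes A: "\<And>x. (A has_real_derivative E x) (at x)" and Epos: "\<And>x. E x > 0"
    and V: "smooth_fun V" "\<And>x. V x * E x = 1"
    and gA: "\<And>x. g (A x) = x" and Ag: "\<And>y. A (g y) = y"
  shows "(deriv ^^ Suc n) g = (\<lambda>y. Qf V n (g y))" "smooth_fun g"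
proof -
  have cg: "isCont g y" for y
  proof -
    have "isCont g (A (g y))"
      by (rule isCont_inverse_function[where f=A and g=g and x="g y" and d=1]) (use gA DERIV_isCont[OF A] in auto)
    then show ?thesis using Ag by simp
  qed
  have dg: "(g has_real_derivative V (g y)) (at y)" for y
  proof -
    have "(g has_real_derivative inverse (E (g y))) (at y)"
      by (rule DERIV_inverse_function[where f=A and a="y-1" and b="y+1"])
         (use A Epos Ag cg in \<open>auto simp: less_imp_neq[symmetric]\<close>)
    moreover have "inverse (E (g y)) = V (g y)" using V(2)[of "g y"] Epos[of "g y"]
      by (simp add: field_simps)
    ultimately show ?thesis by simp
  qed
  show f: "(deriv ^^ Suc n) g = (\<lambda>y. Qf V n (g y))" for n
  proof (induction n)
    case 0 then show ?case by (simp add: deriv_eqI[OF dg])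
  next
    case (Suc n)
    have "(deriv ^^ Suc (Suc n)) g = deriv ((deriv ^^ Suc n) g)" by simp
    also have "\<dots> = deriv (\<lambda>y. Qf V n (g y))" using Suc by simp
    also have "\<dots> = (\<lambda>y. Qf V (Suc n) (g y))"
      by (rule deriv_eqI) (use DERIV_chain2[OF smooth_DERIV0[OF Qf_smooth[OF V(1)]] dg] in simp)
    finally show ?case .
  qed
  show "smooth_fun g"
    unfolding smooth_fun_def
  proof (intro allI)
    fix n y
    show "(deriv ^^ n) g differentiable (at y)"
    proof (cases n)
      case 0 then show ?thesis using DERIV_differentiable[OF dg] by simp
    next
      case (Suc m)
      show ?thesis unfolding Suc f
        by (rule DERIV_differentiable[OF DERIV_chain2[OF smooth_DERIV0[OF Qf_smooth[OF V(1)]] dg]])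
    qed
  qed
qed

definition cpsi :: "nat \<Rightarrow> real" where "cpsi = (SOME c. \<forall>i u. \<bar>(deriv ^^ i) psi u\<bar> \<le> c i)"

lemma cpsi: "\<bar>(deriv ^^ i) psi u\<bar> \<le> cpsi i"
  using someI_ex[OF psi_deriv_bound] unfolding cpsi_def by blast

lemma Rterm_smooth: "smooth_fun (\<lambda>x. R (a*x+b))"
  by (rule smooth_affine[OF R_smooth])

lemma Rterm_bound: "\<bar>(deriv ^^ Suc i) (\<lambda>x. R (a*x+b)) x\<bar> \<le> \<bar>a\<bar> ^ Suc i * cpsi i"
proof -
  have "(deriv ^^ Suc i) (\<lambda>x. R (a*x+b)) x = a ^ Suc i * (deriv ^^ i) psi (a*x+b)"
    by (simp only: higher_deriv_affine[OF R_smooth] R_higher)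
  then show ?thesis using cpsi[of i "a*x+b"]
    by (simp only: abs_mult power_abs) (simp add: mult_left_mono)
qed

lemma hd_add_le:
  assumes "smooth_fun f" "smooth_fun g" "\<bar>(deriv ^^ n) f x\<bar> \<le> Bf" "\<bar>(deriv ^^ n) g x\<bar> \<le> Bg"
  shows "\<bar>(deriv ^^ n) (\<lambda>x. f x + g x) x\<bar> \<le> Bf + Bg"
  using assms by (simp add: higher_deriv_add_real)

lemma hd_diff_le:
  assumes "smooth_fun f" "smooth_fun g" "\<bar>(deriv ^^ n) f x\<bar> \<le> Bf" "\<bar>(deriv ^^ n) g x\<bar> \<le> Bg"
  shows "\<bar>(deriv ^^ n) (\<lambda>x. f x - g x) x\<bar> \<le> Bf + Bg"
  using assms by (simp add: higher_deriv_diff_real)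

definition Dphi :: "nat \<Rightarrow> real" where "Dphi i = 6 * cpsi (i - 1)"

definition Cexp :: "nat \<Rightarrow> real" where
  "Cexp = (SOME C. \<forall>j \<phi> K x. exp_hyp Dphi \<phi> K \<longrightarrow>
          \<bar>(deriv ^^ j) (\<lambda>x. exp (\<phi> x)) x\<bar> \<le> C j * K ^ j * exp (\<phi> x))"

lemma Cexp: "exp_hyp Dphi \<phi> K \<Longrightarrow> \<bar>(deriv ^^ j) (\<lambda>x. exp (\<phi> x)) x\<bar> \<le> Cexp j * K ^ j * exp (\<phi> x)"
  using someI_ex[OF exp_rel_bound[of Dphi]] unfolding Cexp_def by blast

definition rho :: "nat \<Rightarrow> real" where
  "rho m = 1 + (\<Sum>n<m. 2 * \<bar>Cexp n\<bar> * 100 ^ n + \<bar>CQ Cexp n 0\<bar> * 100 ^ n * 2 ^ Suc n)"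

definition ramp :: "real \<Rightarrow> real \<Rightarrow> real" where "ramp M u = R u - R (u - M)"

lemma ramp_left: "u \<le> 0 \<Longrightarrow> 0 \<le> M \<Longrightarrow> ramp M u = 0"
  by (simp add: ramp_def R_left)

lemma ramp_right: "0 \<le> M \<Longrightarrow> M + 1 \<le> u \<Longrightarrow> ramp M u = M"
  using R_right[of u] R_right[of "u - M"] by (simp add: ramp_def)

lemma ramp_bounds: "0 \<le> M \<Longrightarrow> 0 \<le> ramp M u \<and> ramp M u \<le> M"
  using R_diff[of "u - M" u] by (simp add: ramp_def)

lemma ramp_lower: "0 \<le> M \<Longrightarrow> 0 \<le> u \<Longrightarrow> u \<le> M + 1 \<Longrightarrow> ramp M u \<ge> u - 2"
proof -
  assume h: "0 \<le> M" "0 \<le> u" "u \<le> M + 1"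
  show ?thesis
  proof (cases "u \<le> M")
    case True then show ?thesis using R_left[of "u - M"] R_ge[of u] by (simp add: ramp_def)
  next
    case False then show ?thesis using R_diff2[of "u - M" u] h by (simp add: ramp_def)
  qed
qed

lemma exp2_le: "exp (2::real) \<le> 9"
proof -
  have "exp (2::real) = exp 1 * exp 1" by (simp flip: exp_add)
  also have "\<dots> \<le> 3 * 3" using exp_le by (intro mult_mono) auto
  finally show ?thesis by simp
qed

lemma antideriv_SOME:
  assumes "continuous_on UNIV f"
  defines "F \<equiv> SOME F. F 0 = 0 \<and> (\<forall>x. (F has_real_derivative f x) (at x))"
  shows "F 0 = 0" "(F has_real_derivative f x) (at x)"
  using someI_ex[OF antideriv_exists0[OF assms(1)]] unfolding F_def by auto

locale cons =
  fixes s \<delta> :: real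
  assumes dpos: "0 < \<delta>" and ds: "2*\<delta> < s" and s1: "s \<le> 1"
begin

definition "nu = s - 2*\<delta>"
definition "tau = (2* s - 3*\<delta>)/\<delta>"
definition "LL = ln tau"
definition "kap = 100/\<delta>^2"
definition "W1 = (LL + 1)/kap"
definition "W2 = (2*LL + 1)/kap"
definition "W3 = (LL + 1)/kap"

definition sh1 :: "real \<Rightarrow> real" where "sh1 y = ramp LL (kap*y)"
definition sh2 :: "real \<Rightarrow> real" where "sh2 y = LL - ramp (2*LL) (kap*y)"
definition sh3 :: "real \<Rightarrow> real" where "sh3 y = - LL + ramp LL (kap*y)"

lemma spos: "0 < s" using dpos ds by simp
lemma d1: "\<delta> \<le> 1" using ds s1 dpos by simp
lemma nu_pos: "0 < nu" using ds by (simp add: nu_def)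
lemma tau_m1: "tau - 1 = 2*nu/\<delta>" using dpos by (simp add: tau_def nu_def field_simps)
lemma tau_gt1: "1 < tau"
proof -
  have "2*nu/\<delta> > 0" using nu_pos dpos by simp
  then show ?thesis using tau_m1 by linarith
qed
lemma tau_pos: "0 < tau" using tau_gt1 by simp
lemma tau_le2s: "tau \<le> 2* s/\<delta>" using dpos by (simp add: tau_def divide_right_mono)
lemma tau_le: "tau \<le> 2/\<delta>"
  using tau_le2s s1 dpos by (smt (verit) divide_right_mono)
lemma inv_tau: "\<delta>/(2* s) \<le> 1/tau"
proof -
  have "1/tau = \<delta>/(2* s - 3*\<delta>)" using dpos by (simp add: tau_def)
  moreover have "\<delta>/(2* s) \<le> \<delta>/(2* s - 3*\<delta>)"
    by (rule divide_left_mono) (use dpos ds in auto)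
  ultimately show ?thesis by simp
qed
lemma exp_LL: "exp LL = tau" using tau_pos by (simp add: LL_def)
lemma LL_pos: "0 < LL" using tau_gt1 by (simp add: LL_def)
lemma LL_le: "LL \<le> tau - 1" using ln_le_minus_one tau_pos by (simp add: LL_def)
lemma LLd: "LL * \<delta> \<le> 2"
proof -
  have "LL \<le> 2/\<delta>" using LL_le tau_le by simp
  then show ?thesis using dpos by (simp add: field_simps)
qed
lemma kap_pos: "0 < kap" using dpos by (simp add: kap_def)
lemma inv_kap: "1/kap = \<delta>^2/100" by (simp add: kap_def)

lemma W_le: "W1 \<le> 3*\<delta>/100" "W2 \<le> 5*\<delta>/100" "W3 \<le> 3*\<delta>/100"
proof -
  have a: "(LL+1)*\<delta> \<le> 3" using LLd d1 by (simp add: algebra_simps)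
  have b: "(2*LL+1)*\<delta> \<le> 5" using LLd d1 by (simp add: algebra_simps)
  have "W1 = (LL+1)*\<delta>*\<delta>/100" by (simp add: W1_def kap_def power2_eq_square)
  also have "\<dots> \<le> 3*\<delta>/100"
    using a dpos by (simp add: mult.commute)
  finally show "W1 \<le> 3*\<delta>/100" .
  have "W3 = (LL+1)*\<delta>*\<delta>/100" by (simp add: W3_def kap_def power2_eq_square)
  also have "\<dots> \<le> 3*\<delta>/100"
    using a dpos by (simp add: mult.commute)
  finally show "W3 \<le> 3*\<delta>/100" .
  have "W2 = (2*LL+1)*\<delta>*\<delta>/100" by (simp add: W2_def kap_def power2_eq_square)
  also have "\<dots> \<le> 5*\<delta>/100"
    using b dpos by (simp add: mult.commute)
  finally show "W2 \<le> 5*\<delta>/100" .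
qed

lemma W_pos: "0 < W1" "0 < W2" "0 < W3"
  using LL_pos kap_pos by (auto simp: W1_def W2_def W3_def)

lemma kW: "kap * W1 = LL + 1" "kap * W2 = 2*LL + 1" "kap * W3 = LL + 1"
  using kap_pos by (auto simp: W1_def W2_def W3_def)

lemma ramp_smooth: "smooth_fun (\<lambda>y. ramp M (a*y))"
proof -
  have "smooth_fun (\<lambda>y. R (a*y+0) - R (a*y + (-M)))"
    by (intro smooth_diff Rterm_smooth)
  then show ?thesis by (simp add: ramp_def)
qed

lemma sh_smooth: "smooth_fun sh1" "smooth_fun sh2" "smooth_fun sh3"
  unfolding sh1_def[abs_def] sh2_def[abs_def] sh3_def[abs_def]
  by (auto intro!: smooth_diff smooth_add smooth_const ramp_smooth)

lemma sh1_b: "0 \<le> sh1 y" "sh1 y \<le> LL"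
  using ramp_bounds[of LL "kap*y"] LL_pos by (auto simp: sh1_def)
lemma sh2_b: "-LL \<le> sh2 y" "sh2 y \<le> LL"
  using ramp_bounds[of "2*LL" "kap*y"] LL_pos by (auto simp: sh2_def)
lemma sh3_b: "-LL \<le> sh3 y" "sh3 y \<le> 0"
  using ramp_bounds[of LL "kap*y"] LL_pos by (auto simp: sh3_def)

lemma expsh_b:
  "1 \<le> exp (sh1 y)" "exp (sh1 y) \<le> tau"
  "1/tau \<le> exp (sh2 y)" "exp (sh2 y) \<le> tau"
  "1/tau \<le> exp (sh3 y)" "exp (sh3 y) \<le> 1"
proof -
  have e: "exp (-LL) = 1/tau" using exp_LL by (simp add: exp_minus inverse_eq_divide)
  show "1 \<le> exp (sh1 y)" using sh1_b(1)[of y] by simp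
  show "exp (sh1 y) \<le> tau" using sh1_b(2)[of y] exp_LL by (metis exp_le_cancel_iff)
  show "1/tau \<le> exp (sh2 y)" using sh2_b(1)[of y] e by (metis exp_le_cancel_iff)
  show "exp (sh2 y) \<le> tau" using sh2_b(2)[of y] exp_LL by (metis exp_le_cancel_iff)
  show "1/tau \<le> exp (sh3 y)" using sh3_b(1)[of y] e by (metis exp_le_cancel_iff)
  show "exp (sh3 y) \<le> 1" using sh3_b(2)[of y] by simp
qed

definition "G1 = (SOME F. F 0 = 0 \<and> (\<forall>x. (F has_real_derivative exp (sh1 x)) (at x)))"
definition "G2 = (SOME F. F 0 = 0 \<and> (\<forall>x. (F has_real_derivative exp (sh2 x)) (at x)))"
definition "G3 = (SOME F. F 0 = 0 \<and> (\<forall>x. (F has_real_derivative exp (sh3 x)) (at x)))"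

lemma G:
  "G1 0 = 0" "(G1 has_real_derivative exp (sh1 x)) (at x)"
  "G2 0 = 0" "(G2 has_real_derivative exp (sh2 x)) (at x)"
  "G3 0 = 0" "(G3 has_real_derivative exp (sh3 x)) (at x)"
  unfolding G1_def G2_def G3_def
  by (rule antideriv_SOME, rule smooth_cont, rule smooth_exp, rule sh_smooth)+

definition "X1 = G1 W1 - W1"
definition "X2 = G2 W2 - W2"
definition "X3 = G3 W3 - W3"

lemma X1_b: "0 \<le> X1" "X1 \<le> (tau - 1) * W1"
proof -
  have "(\<lambda>y. y) W1 - (\<lambda>y. y) 0 \<le> G1 W1 - G1 0"
    by (rule deriv_le_integrate[of 0 W1 _ "\<lambda>_. 1" _ "\<lambda>y. exp (sh1 y)"])
       (use W_pos expsh_b in \<open>auto intro: G\<close>)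
  then show "0 \<le> X1" using G by (simp add: X1_def)
  have "G1 W1 - G1 0 \<le> (\<lambda>y. tau * y) W1 - (\<lambda>y. tau * y) 0"
    by (rule deriv_le_integrate[of 0 W1 _ "\<lambda>y. exp (sh1 y)" _ "\<lambda>_. tau"])
       (use W_pos expsh_b in \<open>auto intro: G derivative_eq_intros\<close>)
  then show "X1 \<le> (tau - 1) * W1" using G by (simp add: X1_def algebra_simps)
qed

lemma X3_b: "(1/tau - 1) * W3 \<le> X3" "X3 \<le> 0"
proof -
  have "(\<lambda>y. y/tau) W3 - (\<lambda>y. y/tau) 0 \<le> G3 W3 - G3 0"
    by (rule deriv_le_integrate[of 0 W3 _ "\<lambda>_. 1/tau" _ "\<lambda>y. exp (sh3 y)"])
       (use W_pos expsh_b in \<open>auto intro: G derivative_eq_intros\<close>)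
  then show "(1/tau - 1) * W3 \<le> X3" using G by (simp add: X3_def algebra_simps)
  have "G3 W3 - G3 0 \<le> (\<lambda>y. y) W3 - (\<lambda>y. y) 0"
    by (rule deriv_le_integrate[of 0 W3 _ "\<lambda>y. exp (sh3 y)" _ "\<lambda>_. 1"])
       (use W_pos expsh_b in \<open>auto intro: G derivative_eq_intros\<close>)
  then show "X3 \<le> 0" using G by (simp add: X3_def algebra_simps)
qed

lemma X2_lower: "(1/tau - 1) * W2 \<le> X2"
proof -
  have "(\<lambda>y. y/tau) W2 - (\<lambda>y. y/tau) 0 \<le> G2 W2 - G2 0"
    by (rule deriv_le_integrate[of 0 W2 _ "\<lambda>_. 1/tau" _ "\<lambda>y. exp (sh2 y)"])
       (use W_pos expsh_b in \<open>auto intro: G derivative_eq_intros\<close>)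
  then show ?thesis using G by (simp add: X2_def algebra_simps)
qed

lemma sh2_pt: "0 \<le> y \<Longrightarrow> y \<le> W2 \<Longrightarrow> exp (sh2 y) \<le> 1 + (tau - 1) * exp (2 - kap*y)"
proof -
  assume y: "0 \<le> y" "y \<le> W2"
  define z where "z = exp (2 - kap*y)"
  have zpos: "0 < z" by (simp add: z_def)
  have r0: "0 \<le> ramp (2*LL) (kap*y)" using ramp_bounds[of "2*LL"] LL_pos by auto
  have r1: "kap*y - 2 \<le> ramp (2*LL) (kap*y)"
  proof (rule ramp_lower)
    show "0 \<le> kap*y" using kap_pos y by simp
    have "kap * y \<le> kap * W2" using kap_pos y by (simp add: mult_left_mono)
    then show "kap*y \<le> 2*LL + 1" using kW by simp
  qed (use LL_pos in simp)
  show ?thesis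
  proof (cases "2 \<le> kap*y")
    case True
    have "exp (sh2 y) \<le> exp (LL + (2 - kap*y))" using r1 by (simp add: sh2_def)
    also have "\<dots> = tau * z" by (simp add: exp_add exp_LL z_def)
    finally have a: "exp (sh2 y) \<le> tau * z" .
    have "z \<le> 1" using True by (simp add: z_def)
    then have "tau * z \<le> 1 + (tau - 1) * z" by (simp add: algebra_simps)
    then show ?thesis using a by (simp add: z_def)
  next
    case False
    have "exp (sh2 y) \<le> tau" using expsh_b by simp
    moreover have "1 \<le> z" using False by (simp add: z_def)
    then have "tau \<le> 1 + (tau - 1) * z" using tau_gt1
      by (smt (verit) mult_le_cancel_left1)
    ultimately show ?thesis by (simp add: z_def)
  qed
qed

lemma X2_upper: "X2 \<le> 9 * (tau - 1) / kap"
proof -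
  define H where "H y = y - (tau - 1) * exp (2 - kap*y) / kap" for y
  have dH: "(H has_real_derivative 1 + (tau - 1) * exp (2 - kap*y)) (at y)" for y
    unfolding H_def[abs_def] using kap_pos
    by (auto intro!: derivative_eq_intros simp: field_simps)
  have "G2 W2 - G2 0 \<le> H W2 - H 0"
    by (rule deriv_le_integrate[of 0 W2 _ "\<lambda>y. exp (sh2 y)" _ "\<lambda>y. 1 + (tau - 1) * exp (2 - kap*y)"])
       (use W_pos sh2_pt in \<open>auto intro: G dH\<close>)
  also have "H W2 - H 0 = W2 + (tau - 1) * exp 2 / kap - (tau - 1) * exp (2 - kap*W2) / kap"
    by (simp add: H_def algebra_simps)
  also have "\<dots> \<le> W2 + (tau - 1) * exp 2 / kap"
    using tau_gt1 kap_pos by simp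
  also have "W2 + (tau - 1) * exp 2 / kap \<le> W2 + (tau - 1) * 9 / kap"
    using tau_gt1 kap_pos exp2_le by (intro add_left_mono divide_right_mono mult_left_mono) auto
  finally have "G2 W2 - G2 0 \<le> W2 + (tau - 1) * 9 / kap" .
  then show ?thesis using G by (simp add: X2_def algebra_simps)
qed

definition "p1 = \<delta> - W1 - (nu - X1)/(tau - 1)"
definition "Z = (nu + X2 + X3) * tau / (tau - 1)"
definition "p3 = \<delta> + W2 + Z"

lemma p1_facts: "0 < p1" "p1 + W1 \<le> \<delta>"
proof -
  have t: "0 < tau - 1" using tau_gt1 by simp
  have "(nu - X1)/(tau - 1) \<le> nu/(tau - 1)" using X1_b t by (simp add: divide_right_mono)
  also have "\<dots> = \<delta>/2" unfolding tau_m1 using nu_pos dpos by (simp add: field_simps)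
  finally have a: "(nu - X1)/(tau - 1) \<le> \<delta>/2" .
  moreover have "W1 < \<delta>/2" using W_le(1) dpos by simp
  ultimately show "0 < p1" unfolding p1_def by linarith
  have "X1 \<le> (tau - 1) * W1" by (rule X1_b)
  also have "\<dots> = 2*nu*W1/\<delta>" by (simp add: tau_m1)
  also have "\<dots> \<le> 2*nu*(3*\<delta>/100)/\<delta>"
    using W_le nu_pos dpos by (intro divide_right_mono mult_left_mono) auto
  also have "\<dots> \<le> nu" using dpos nu_pos by (simp add: field_simps)
  finally have "0 \<le> (nu - X1)/(tau - 1)" using t by simp
  then show "p1 + W1 \<le> \<delta>" unfolding p1_def by linarith
qed

lemma Z_facts: "0 \<le> Z" "p3 + W3 < s" "Z * (1 - 1/tau) = nu + X2 + X3"
proof -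
  have t: "0 < tau - 1" using tau_gt1 by simp
  have q: "(tau - 1)/tau \<le> tau - 1" using tau_gt1 divide_left_mono[of 1 tau "tau - 1"] by simp
  have w: "W2 + W3 \<le> 8*\<delta>/100" using W_le by simp
  have "X2 + X3 \<ge> (1/tau - 1) * (W2 + W3)" using X2_lower X3_b by (simp add: algebra_simps)
  moreover have "(1/tau - 1) * (W2 + W3) = - ((tau - 1)/tau) * (W2 + W3)"
    using tau_pos by (simp add: field_simps)
  moreover have "((tau - 1)/tau) * (W2 + W3) \<le> (tau - 1) * (W2 + W3)"
    using mult_right_mono[OF q, of "W2 + W3"] W_pos by simp
  moreover have "(tau - 1) * (W2 + W3) \<le> (2*nu/\<delta>) * (8*\<delta>/100)"
    using w tau_m1 t by (metis mult_left_mono less_imp_le)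
  moreover have "(2*nu/\<delta>) * (8*\<delta>/100) = 16*nu/100" using dpos by simp
  ultimately have "nu + X2 + X3 \<ge> 0" using nu_pos by linarith
  then show "0 \<le> Z" using t tau_pos by (simp add: Z_def)
  show "Z * (1 - 1/tau) = nu + X2 + X3" using t tau_pos by (simp add: Z_def field_simps)
  have "Z \<le> (nu + X2) * tau / (tau - 1)"
    using X3_b t tau_pos by (simp add: Z_def divide_right_mono mult_right_mono)
  also have "\<dots> = nu * tau/(tau - 1) + X2 * tau / (tau - 1)" by (simp add: add_divide_distrib distrib_right)
  also have "nu * tau/(tau - 1) = (2* s - 3*\<delta>)/2"
    using tau_m1 nu_pos dpos by (simp add: tau_def field_simps)
  also have "X2 * tau / (tau - 1) \<le> (9 * (tau - 1) / kap) * tau / (tau - 1)"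
    using X2_upper t tau_pos by (intro divide_right_mono mult_right_mono) auto
  also have "(9 * (tau - 1) / kap) * tau / (tau - 1) = 9 * tau / kap" using t kap_pos by (simp add: field_simps)
  also have "9 * tau / kap \<le> 9 * (2/\<delta>) / kap"
    using tau_le kap_pos by (intro divide_right_mono mult_left_mono) auto
  also have "9 * (2/\<delta>) / kap = 18*\<delta>/100" using dpos by (simp add: kap_def power2_eq_square)
  finally have "Z \<le> (2* s - 3*\<delta>)/2 + 18*\<delta>/100" by simp
  then show "p3 + W3 < s" using W_le dpos unfolding p3_def by (simp add: field_simps)
qed

end

context cons begin

definition phi :: "real \<Rightarrow> real" where
  "phi x = ramp LL (kap*(x - p1)) - ramp (2*LL) (kap*(x - \<delta>)) + ramp LL (kap*(x - p3))"

lemma ord: "0 < p1" "p1 + W1 \<le> \<delta>" "\<delta> + W2 \<le> p3" "p3 + W3 < s"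
  using p1_facts Z_facts by (auto simp: p3_def)

lemma kge: "x - p \<ge> W \<Longrightarrow> kap * (x - p) \<ge> kap * W"
  using kap_pos by (simp add: mult_left_mono)

lemma kle: "x \<le> p \<Longrightarrow> kap * (x - p) \<le> 0"
  using kap_pos by (simp add: mult_nonneg_nonpos)

lemma rL0: "x \<le> p \<Longrightarrow> ramp LL (kap*(x - p)) = 0"
  using ramp_left[OF kle] LL_pos by simp
lemma r2L0: "x \<le> p \<Longrightarrow> ramp (2*LL) (kap*(x - p)) = 0"
  using ramp_left[OF kle] LL_pos by simp
lemma rL1: "x - p \<ge> W1 \<Longrightarrow> ramp LL (kap*(x - p)) = LL"
  using ramp_right[of LL "kap*(x-p)"] kge[of W1 x p] kW LL_pos by simp
lemma rL3: "x - p \<ge> W3 \<Longrightarrow> ramp LL (kap*(x - p)) = LL"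
  using ramp_right[of LL "kap*(x-p)"] kge[of W3 x p] kW LL_pos by simp
lemma r2L2: "x - p \<ge> W2 \<Longrightarrow> ramp (2*LL) (kap*(x - p)) = 2*LL"
  using ramp_right[of "2*LL" "kap*(x-p)"] kge[of W2 x p] kW LL_pos by simp

lemma P0: assumes "x \<le> p1" shows "phi x = 0"
proof -
  have "x \<le> \<delta>" "x \<le> p3" using assms ord W_pos by linarith+
  then show ?thesis using assms by (simp add: phi_def rL0 r2L0)
qed
lemma P2: assumes "p1 \<le> x" "x \<le> p1 + W1" shows "phi x = sh1 (x - p1)"
proof -
  have "x \<le> \<delta>" "x \<le> p3" using assms ord W_pos by linarith+
  then show ?thesis using assms by (simp add: phi_def rL0 r2L0 sh1_def)
qed
lemma P3: assumes "p1 + W1 \<le> x" "x \<le> \<delta>" shows "phi x = LL"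
proof -
  have "x \<le> \<delta>" "x \<le> p3" "x - p1 \<ge> W1" using assms ord W_pos by linarith+
  then show ?thesis using assms by (simp add: phi_def rL0 r2L0 rL1)
qed
lemma P4: assumes "\<delta> \<le> x" "x \<le> \<delta> + W2" shows "phi x = sh2 (x - \<delta>)"
proof -
  have "x \<le> p3" "x - p1 \<ge> W1" using assms ord W_pos by linarith+
  then show ?thesis using assms by (simp add: phi_def rL0 rL1 sh2_def)
qed
lemma P5: assumes "\<delta> + W2 \<le> x" "x \<le> p3" shows "phi x = - LL"
proof -
  have "x - \<delta> \<ge> W2" "x - p1 \<ge> W1" using assms ord W_pos by linarith+
  then show ?thesis using assms by (simp add: phi_def rL0 rL1 r2L2)
qed
lemma P6: assumes "p3 \<le> x" "x \<le> p3 + W3" shows "phi x = sh3 (x - p3)"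
proof -
  have "x - \<delta> \<ge> W2" "x - p1 \<ge> W1" using assms ord W_pos by linarith+
  then show ?thesis using assms by (simp add: phi_def rL1 r2L2 sh3_def)
qed
lemma P7: assumes "p3 + W3 \<le> x" shows "phi x = 0"
proof -
  have "x - \<delta> \<ge> W2" "x - p1 \<ge> W1" "x - p3 \<ge> W3" using assms ord W_pos by linarith+
  then show ?thesis using assms by (simp add: phi_def rL1 r2L2 rL3)
qed

lemma phi_cases:
  obtains "x \<le> p1" | "p1 \<le> x" "x \<le> p1 + W1" | "p1 + W1 \<le> x" "x \<le> \<delta>"
    | "\<delta> \<le> x" "x \<le> \<delta> + W2" | "\<delta> + W2 \<le> x" "x \<le> p3" | "p3 \<le> x" "x \<le> p3 + W3"
    | "p3 + W3 \<le> x"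
  by (metis linorder_le_cases)

lemma phi_b: "- LL \<le> phi x \<and> phi x \<le> LL"
  using LL_pos
  by (cases x rule: phi_cases)
     (auto simp: P0 P2 P3 P4 P5 P6 P7 sh1_b sh2_b sh3_b intro: order_trans[OF sh3_b(2)] order_trans[OF _ sh1_b(1)])

lemma phi_nonneg: "x \<le> \<delta> \<Longrightarrow> 0 \<le> phi x"
  using LL_pos ord W_pos
  by (cases x rule: phi_cases) (auto simp: P0 P2 P3 sh1_b)

lemma phi_nonpos: "\<delta> + W2 \<le> x \<Longrightarrow> phi x \<le> 0"
  using LL_pos ord W_pos
  by (cases x rule: phi_cases) (auto simp: P5 P6 P7 sh3_b)

lemma phi_alt: "phi = (\<lambda>x. ((((R (kap*x + (-kap*p1)) - R (kap*x + (-kap*p1 - LL)))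
     - R (kap*x + (-kap*\<delta>))) + R (kap*x + (-kap*\<delta> - 2*LL)))
     + R (kap*x + (-kap*p3))) - R (kap*x + (-kap*p3 - LL)))"
  by (auto simp: phi_def ramp_def fun_eq_iff algebra_simps)

lemma phi_smooth: "smooth_fun phi"
  unfolding phi_alt by (intro smooth_add smooth_diff Rterm_smooth)

lemma phi_dbound: "\<bar>(deriv ^^ Suc i) phi x\<bar> \<le> Dphi (Suc i) * kap ^ Suc i"
proof -
  have b: "\<bar>(deriv ^^ Suc i) (\<lambda>x. R (kap*x + b)) x\<bar> \<le> kap ^ Suc i * cpsi i" for b
    using Rterm_bound[of i kap b x] kap_pos by simp
  have "\<bar>(deriv ^^ Suc i) phi x\<bar> \<le> ((((kap ^ Suc i * cpsi i + kap ^ Suc i * cpsi i) + kap ^ Suc i * cpsi i)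
       + kap ^ Suc i * cpsi i) + kap ^ Suc i * cpsi i) + kap ^ Suc i * cpsi i"
    unfolding phi_alt
    by (intro hd_add_le hd_diff_le smooth_add smooth_diff Rterm_smooth b)
  then show ?thesis by (simp add: Dphi_def mult_ac)
qed

definition md :: "real \<Rightarrow> real" where "md x = x - s * of_int \<lfloor>x/s\<rfloor>"

lemma floor_char: "\<lfloor>z/s\<rfloor> = k \<longleftrightarrow> of_int k * s \<le> z \<and> z < (of_int k + 1) * s"
  using spos by (simp add: floor_eq_iff pos_le_divide_eq pos_divide_less_eq)

lemma md_range: "0 \<le> md x" "md x < s"
proof -
  have "of_int \<lfloor>x/s\<rfloor> * s \<le> x \<and> x < (of_int \<lfloor>x/s\<rfloor> + 1) * s" using floor_char by blast
  then show "0 \<le> md x" "md x < s" by (auto simp: md_def algebra_simps)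
qed

lemma md_eq: "0 \<le> x \<Longrightarrow> x < s \<Longrightarrow> md x = x"
  using floor_char[of x 0] by (simp add: md_def)

lemma md_shift: "md (x + s) = md x"
proof -
  have "\<lfloor>(x+s)/s\<rfloor> = \<lfloor>x/s\<rfloor> + 1"
    using spos by (simp add: add_divide_distrib)
  then show ?thesis by (simp add: md_def algebra_simps)
qed

definition phip :: "real \<Rightarrow> real" where "phip x = phi (md x)"

lemma phip_eq: "0 \<le> x \<Longrightarrow> x \<le> s \<Longrightarrow> phip x = phi x"
proof -
  assume x: "0 \<le> x" "x \<le> s"
  show ?thesis
  proof (cases "x = s")
    case True
    have "md s = 0" using md_shift[of 0] md_eq[of 0] spos by simp
    then show ?thesis using True ord P0[of 0] P7[of s] by (simp add: phip_def)
  next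
    case False then show ?thesis using x md_eq by (simp add: phip_def)
  qed
qed

lemma phip_shift: "phip (x + s) = phip x" by (simp add: phip_def md_shift)

lemma phip_b: "- LL \<le> phip x \<and> phip x \<le> LL" by (simp add: phip_def phi_b)

lemma phip_local:
  "\<exists>S. open S \<and> x \<in> S \<and> (\<forall>z\<in>S. phip z = phi (1 * z + (- s * of_int \<lfloor>x/s\<rfloor>)))"
proof -
  define k where "k = \<lfloor>x/s\<rfloor>"
  define \<eta> where "\<eta> = min p1 (s - (p3 + W3))"
  have eta: "0 < \<eta>" using ord by (simp add: \<eta>_def)
  have xk: "of_int k * s \<le> x" "x < (of_int k + 1) * s" using floor_char[of x k] by (auto simp: k_def)
  define S where "S = {of_int k * s - \<eta> <..< (of_int k + 1) * s}"
  have "phip z = phi (1 * z + (- s * of_int k))" if z: "z \<in> S" for z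
  proof (cases "of_int k * s \<le> z")
    case True
    then have "\<lfloor>z/s\<rfloor> = k" using z floor_char by (auto simp: S_def)
    then show ?thesis by (simp add: phip_def md_def algebra_simps)
  next
    case False
    have el: "\<eta> \<le> s" using ord W_pos by (simp add: \<eta>_def)
    have "of_int (k-1) * s \<le> z \<and> z < (of_int (k-1) + 1) * s"
      using z False el by (auto simp: S_def algebra_simps)
    then have "\<lfloor>z/s\<rfloor> = k - 1" using floor_char by blast
    then have e: "real_of_int \<lfloor>z/s\<rfloor> = real_of_int k - 1" by simp
    have "md z = z - of_int k * s + s" unfolding md_def e by (simp add: algebra_simps)
    moreover have "p3 + W3 \<le> z - of_int k * s + s" using z by (auto simp: S_def \<eta>_def)
    moreover have "z - of_int k * s \<le> p1" using False ord by simp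
    ultimately show ?thesis using P7 P0 by (simp add: phip_def algebra_simps)
  qed
  moreover have "open S" "x \<in> S" using xk eta by (auto simp: S_def)
  ultimately show ?thesis unfolding k_def by blast
qed

lemma phip_smooth: "smooth_fun phip"
proof (rule smooth_local)
  fix x
  obtain S where S: "open S" "x \<in> S" "\<forall>z\<in>S. phip z = phi (1 * z + (- s * of_int \<lfloor>x/s\<rfloor>))"
    using phip_local by blast
  then show "\<exists>S h. open S \<and> x \<in> S \<and> smooth_fun h \<and> (\<forall>y\<in>S. phip y = h y)"
    using smooth_affine[OF phi_smooth] by blast
qed

lemma phip_dbound: "\<bar>(deriv ^^ Suc i) phip x\<bar> \<le> Dphi (Suc i) * kap ^ Suc i"
proof -
  obtain S where S: "open S" "x \<in> S" "\<forall>z\<in>S. phip z = phi (1 * z + (- s * of_int \<lfloor>x/s\<rfloor>))"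
    using phip_local by blast
  have "(deriv ^^ Suc i) phip x = (deriv ^^ Suc i) (\<lambda>z. phi (1 * z + (- s * of_int \<lfloor>x/s\<rfloor>))) x"
    by (rule higher_deriv_local[OF S(1,2)]) (use S(3) in blast)
  also have "\<dots> = (deriv ^^ Suc i) phi (x - s * of_int \<lfloor>x/s\<rfloor>)"
    by (simp only: higher_deriv_affine[OF phi_smooth]) simp
  finally show ?thesis using phi_dbound by simp
qed

lemma hypE: "exp_hyp Dphi phip kap"
  using phip_smooth phip_dbound kap_pos by (simp add: exp_hyp_def less_imp_le)

lemma hypV: "exp_hyp Dphi (\<lambda>x. - phip x) kap"
  unfolding exp_hyp_def
proof (intro conjI allI)
  show "smooth_fun (\<lambda>x. - phip x)" by (rule smooth_minus[OF phip_smooth])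
  show "0 \<le> kap" using kap_pos by simp
  fix i y
  show "\<bar>(deriv ^^ Suc i) (\<lambda>x. - phip x) y\<bar> \<le> Dphi (Suc i) * kap ^ Suc i"
    unfolding higher_deriv_minus_real[OF phip_smooth] using phip_dbound by simp
qed

end

context cons begin

definition E :: "real \<Rightarrow> real" where "E x = exp (phip x)"
definition V :: "real \<Rightarrow> real" where "V x = exp (- phip x)"

lemma E_smooth: "smooth_fun E" unfolding E_def[abs_def] by (rule smooth_exp[OF phip_smooth])
lemma V_smooth: "smooth_fun V" unfolding V_def[abs_def] by (rule smooth_exp[OF smooth_minus[OF phip_smooth]])
lemma E_pos: "0 < E x" by (simp add: E_def)
lemma V_pos: "0 < V x" by (simp add: V_def)
lemma VE: "V x * E x = 1" by (simp add: V_def E_def flip: exp_add)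
lemma E_b: "1/tau \<le> E x" "E x \<le> tau"
proof -
  have e: "exp (-LL) = 1/tau" using exp_LL by (simp add: exp_minus inverse_eq_divide)
  show "1/tau \<le> E x" using phip_b[of x] e unfolding E_def by (metis exp_le_cancel_iff)
  show "E x \<le> tau" using phip_b[of x] exp_LL unfolding E_def by (metis exp_le_cancel_iff)
qed
lemma V_b: "V x \<le> tau"
proof -
  have "exp (- phip x) \<le> exp LL" using phip_b[of x] by simp
  then show ?thesis using exp_LL by (simp add: V_def)
qed
lemma E_on: "0 \<le> x \<Longrightarrow> x \<le> s \<Longrightarrow> E x = exp (phi x)" by (simp add: E_def phip_eq)
lemma E_per: "E (x + s) = E x" by (simp add: E_def phip_shift)

definition "A = (SOME F. F 0 = 0 \<and> (\<forall>x. (F has_real_derivative E x) (at x)))"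

lemma A: "A 0 = 0" "(A has_real_derivative E x) (at x)"
  unfolding A_def by (rule antideriv_SOME, rule smooth_cont, rule E_smooth)+

lemma A_p1: "A p1 = p1"
proof -
  have "A p1 - A 0 = (\<lambda>x. x) p1 - (\<lambda>x. x) 0"
  proof (rule deriv_eq_integrate[where f=E])
    show "0 \<le> p1" using ord by simp
    show "((\<lambda>x. x) has_real_derivative E y) (at y)" if "y \<in> {0..p1}" for y
    proof -
      have y: "0 \<le> y" "y \<le> s" "y \<le> p1" using that ord W_pos dpos ds by auto
      have "E y = 1" using E_on[OF y(1,2)] P0[OF y(3)] by simp
      then show ?thesis by (auto intro!: derivative_eq_intros)
    qed
  qed (rule A)
  then show ?thesis using A by simp
qed

lemma shiftG:
  assumes "\<And>y. (G has_real_derivative g y) (at y)"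
  shows "((\<lambda>x. G (x - p)) has_real_derivative g (x - p)) (at x)"
proof -
  have "((\<lambda>x. x - p) has_real_derivative 1) (at x)" by (auto intro!: derivative_eq_intros)
  from DERIV_chain2[OF assms this] show ?thesis by simp
qed

lemma A_W1: "A (p1 + W1) - A p1 = G1 W1"
proof -
  have "A (p1 + W1) - A p1 = (\<lambda>x. G1 (x - p1)) (p1 + W1) - (\<lambda>x. G1 (x - p1)) p1"
  proof (rule deriv_eq_integrate[where f=E])
    show "p1 \<le> p1 + W1" using W_pos by simp
    show "((\<lambda>x. G1 (x - p1)) has_real_derivative E y) (at y)" if "y \<in> {p1..p1 + W1}" for y
    proof -
      have y: "0 \<le> y" "y \<le> s" "p1 \<le> y" "y \<le> p1 + W1" using that ord W_pos dpos ds by auto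
      have "E y = exp (sh1 (y - p1))" using E_on[OF y(1,2)] P2[OF y(3,4)] by simp
      then show ?thesis using shiftG[OF G(2), of p1 y] by simp
    qed
  qed (rule A)
  then show ?thesis using G by simp
qed

lemma A_d: "A \<delta> - A (p1 + W1) = tau * (\<delta> - p1 - W1)"
proof -
  have "A \<delta> - A (p1 + W1) = (\<lambda>x. tau * x) \<delta> - (\<lambda>x. tau * x) (p1 + W1)"
  proof (rule deriv_eq_integrate[where f=E])
    show "p1 + W1 \<le> \<delta>" using ord by simp
    show "((\<lambda>x. tau * x) has_real_derivative E y) (at y)" if "y \<in> {p1 + W1..\<delta>}" for y
    proof -
      have y: "0 \<le> y" "y \<le> s" "p1 + W1 \<le> y" "y \<le> \<delta>" using that ord W_pos dpos ds by auto
      have "E y = tau" using E_on[OF y(1,2)] P3[OF y(3,4)] exp_LL by simp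
      then show ?thesis using DERIV_cmult_Id[of tau y] by simp
    qed
  qed (rule A)
  then show ?thesis by (simp add: algebra_simps)
qed

lemma A_delta: "A \<delta> = s - \<delta>"
proof -
  define Y where "Y = (nu - X1)/(tau - 1)"
  have t: "tau - 1 \<noteq> 0" using tau_gt1 by simp
  have "(tau - 1) * Y = nu - X1" using t by (simp add: Y_def)
  then have e1: "tau * Y = Y + nu - X1" by (simp add: algebra_simps)
  have e2: "\<delta> - p1 - W1 = Y" by (simp add: p1_def Y_def)
  have "A \<delta> = p1 + G1 W1 + tau * (\<delta> - p1 - W1)" using A_p1 A_W1 A_d by simp
  then have "A \<delta> = p1 + G1 W1 + tau * Y" by (simp only: e2)
  then show ?thesis using e1 e2 unfolding X1_def nu_def by linarith
qed

lemma A_W2: "A (\<delta> + W2) - A \<delta> = G2 W2"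
proof -
  have "A (\<delta> + W2) - A \<delta> = (\<lambda>x. G2 (x - \<delta>)) (\<delta> + W2) - (\<lambda>x. G2 (x - \<delta>)) \<delta>"
  proof (rule deriv_eq_integrate[where f=E])
    show "\<delta> \<le> \<delta> + W2" using W_pos by simp
    show "((\<lambda>x. G2 (x - \<delta>)) has_real_derivative E y) (at y)" if "y \<in> {\<delta>..\<delta> + W2}" for y
    proof -
      have y: "0 \<le> y" "y \<le> s" "\<delta> \<le> y" "y \<le> \<delta> + W2" using that ord W_pos dpos ds by auto
      have "E y = exp (sh2 (y - \<delta>))" using E_on[OF y(1,2)] P4[OF y(3,4)] by simp
      then show ?thesis using shiftG[OF G(4), of \<delta> y] by simp
    qed
  qed (rule A)
  then show ?thesis using G by simp
qed

lemma A_p3: "A p3 - A (\<delta> + W2) = (p3 - \<delta> - W2) / tau"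
proof -
  have "A p3 - A (\<delta> + W2) = (\<lambda>x. x / tau) p3 - (\<lambda>x. x / tau) (\<delta> + W2)"
  proof (rule deriv_eq_integrate[where f=E])
    show "\<delta> + W2 \<le> p3" using ord by simp
    show "((\<lambda>x. x / tau) has_real_derivative E y) (at y)" if "y \<in> {\<delta> + W2..p3}" for y
    proof -
      have y: "0 \<le> y" "y \<le> s" "\<delta> + W2 \<le> y" "y \<le> p3" using that ord W_pos dpos ds by auto
      have "E y = 1/tau" using E_on[OF y(1,2)] P5[OF y(3,4)] exp_LL
        by (auto simp: exp_minus inverse_eq_divide)
      then show ?thesis using tau_pos by (auto intro!: derivative_eq_intros)
    qed
  qed (rule A)
  then show ?thesis by (simp add: diff_divide_distrib add_divide_distrib)
qed

lemma A_W3: "A (p3 + W3) - A p3 = G3 W3"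
proof -
  have "A (p3 + W3) - A p3 = (\<lambda>x. G3 (x - p3)) (p3 + W3) - (\<lambda>x. G3 (x - p3)) p3"
  proof (rule deriv_eq_integrate[where f=E])
    show "p3 \<le> p3 + W3" using W_pos by simp
    show "((\<lambda>x. G3 (x - p3)) has_real_derivative E y) (at y)" if "y \<in> {p3..p3 + W3}" for y
    proof -
      have y: "0 \<le> y" "y \<le> s" "p3 \<le> y" "y \<le> p3 + W3" using that ord W_pos dpos ds by auto
      have "E y = exp (sh3 (y - p3))" using E_on[OF y(1,2)] P6[OF y(3,4)] by simp
      then show ?thesis using shiftG[OF G(6), of p3 y] by simp
    qed
  qed (rule A)
  then show ?thesis using G by simp
qed

lemma A_end: "A s - A (p3 + W3) = s - (p3 + W3)"
proof -
  have "A s - A (p3 + W3) = (\<lambda>x. x) s - (\<lambda>x. x) (p3 + W3)"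
  proof (rule deriv_eq_integrate[where f=E])
    show "p3 + W3 \<le> s" using ord by simp
    show "((\<lambda>x. x) has_real_derivative E y) (at y)" if "y \<in> {p3 + W3..s}" for y
    proof -
      have y: "0 \<le> y" "y \<le> s" "p3 + W3 \<le> y" using that ord W_pos dpos ds by auto
      have "E y = 1" using E_on[OF y(1,2)] P7[OF y(3)] by simp
      then show ?thesis by (auto intro!: derivative_eq_intros)
    qed
  qed (rule A)
  then show ?thesis by simp
qed

lemma A_s: "A s = s"
proof -
  have "A s = (s - \<delta>) + G2 W2 + (p3 - \<delta> - W2) / tau + G3 W3 + (s - (p3 + W3))"
    using A_delta A_W2 A_p3 A_W3 A_end by simp
  also have "\<dots> = 2* s - 2*\<delta> + X2 + X3 - Z * (1 - 1/tau)"
    by (simp add: X2_def X3_def p3_def algebra_simps diff_divide_distrib add_divide_distrib)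
  also have "\<dots> = s" using Z_facts(3) by (simp add: nu_def)
  finally show ?thesis .
qed

lemma A_per: "A (x + s) = A x + s"
proof -
  have "((\<lambda>x. A (x + s) - A x) has_real_derivative 0) (at y)" for y
  proof -
    have "((\<lambda>x. A (x + s) - A x) has_real_derivative E (y + s) - E y) (at y)"
    proof -
      have d1: "((\<lambda>x. A (x + s)) has_real_derivative E (y + s)) (at y)"
        using shiftG[OF A(2), of "-s" y] by simp
      show ?thesis by (rule DERIV_diff[OF d1 A(2)])
    qed
    then show ?thesis by (simp add: E_per)
  qed
  then have "\<forall>y. ((\<lambda>x. A (x + s) - A x) has_real_derivative 0) (at y)" by blast
  from DERIV_isconst_all[OF this, of x 0] have "A (x + s) - A x = A (0 + s) - A 0" by simp
  then show ?thesis using A A_s by simp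
qed

lemma A_per_int: "A (x + of_int k * s) = A x + of_int k * s"
proof -
  have n: "A (x + real n * s) = A x + real n * s" for n x
  proof (induction n arbitrary: x)
    case 0 then show ?case by simp
  next
    case (Suc n)
    have "A (x + real (Suc n) * s) = A ((x + real n * s) + s)" by (simp add: algebra_simps)
    also have "\<dots> = A (x + real n * s) + s" by (rule A_per)
    finally show ?case using Suc by (simp add: algebra_simps)
  qed
  show ?thesis
  proof (cases "k \<ge> 0")
    case True then obtain n where "k = int n" by (metis nonneg_int_cases)
    then show ?thesis using n by simp
  next
    case False then obtain n where kn: "k = - int n" by (metis linorder_not_le neg_int_cases less_imp_le) 
    have "A (x - real n * s + real n * s) = A (x - real n * s) + real n * s" by (rule n)
    then show ?thesis using kn by simp
  qed
qed

lemma A_strict: "x < y \<Longrightarrow> A x < A y"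
  by (rule DERIV_pos_imp_increasing[of x y A]) (use A(2) E_pos in blast)+

lemma A_mono: "x \<le> y \<Longrightarrow> A x \<le> A y"
  using A_strict by (cases "x = y") (auto simp: less_imp_le)

definition a :: "real \<Rightarrow> real" where "a x = A x - x"

lemma a_per: "a (x + s) = a x" by (simp add: a_def A_per)

lemma a_int: "a (x + of_int k * s) = a x" by (simp add: a_def A_per_int)

lemma a_base: assumes "0 \<le> x" "x \<le> s" shows "0 \<le> a x \<and> a x \<le> s"
proof -
  have up: "a x \<le> s" using A_mono[of x s] A_s assms by (simp add: a_def)
  have lo: "0 \<le> a x"
  proof (cases "x \<le> \<delta>")
    case True
    have "(\<lambda>y. y) x - (\<lambda>y. y) 0 \<le> A x - A 0"
    proof (rule deriv_le_integrate[where f="\<lambda>_. 1" and h=E])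
      show "1 \<le> E y" if "y \<in> {0..x}" for y
        using that True assms E_on[of y] phi_nonneg[of y] dpos ds by auto
    qed (use assms A in auto)
    then show ?thesis using A by (simp add: a_def)
  next
    case False
    show ?thesis
    proof (cases "x \<le> \<delta> + W2")
      case True
      have "(\<lambda>y. y / tau) x - (\<lambda>y. y / tau) \<delta> \<le> A x - A \<delta>"
      proof (rule deriv_le_integrate[where f="\<lambda>_. 1/tau" and h=E])
        show "1/tau \<le> E y" for y by (rule E_b)
      qed (use False A tau_pos in \<open>auto intro!: derivative_eq_intros\<close>)
      then have i: "(x - \<delta>) / tau \<le> A x - (s - \<delta>)" using A_delta by (simp add: diff_divide_distrib)
      have "(x - \<delta>) * (1 - 1/tau) \<le> W2 * (tau - 1)"
      proof (rule mult_mono)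
        show "1 - 1/tau \<le> tau - 1" using tau_gt1 divide_left_mono[of 1 tau "tau - 1"]
          by (simp add: field_simps)
      qed (use True False tau_gt1 in auto)
      also have "W2 * (tau - 1) = 2 * nu * W2 / \<delta>" by (simp add: tau_m1)
      also have "\<dots> \<le> 2 * nu * (5 * \<delta> / 100) / \<delta>"
        using W_le nu_pos dpos by (intro divide_right_mono mult_left_mono) auto
      also have "\<dots> = nu / 10" using dpos by simp
      finally have "(x - \<delta>) * (1 - 1/tau) \<le> nu / 10" .
      moreover have "(x - \<delta>) / tau = (x - \<delta>) - (x - \<delta>) * (1 - 1/tau)" by (simp add: algebra_simps)
      ultimately show ?thesis using i nu_pos by (simp add: a_def nu_def)
    next
      case False
      have "A s - A x \<le> (\<lambda>y. y) s - (\<lambda>y. y) x"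
      proof (rule deriv_le_integrate[where f=E and h="\<lambda>_. 1"])
        show "E y \<le> 1" if "y \<in> {x..s}" for y
          using that False assms E_on[of y] phi_nonpos[of y] dpos by auto
      qed (use assms A in auto)
      then show ?thesis using A_s by (simp add: a_def)
    qed
  qed
  show ?thesis using up lo by simp
qed

lemma a_b: "0 \<le> a x \<and> a x \<le> s"
proof -
  have "a x = a (md x + of_int \<lfloor>x/s\<rfloor> * s)" by (simp add: md_def)
  also have "\<dots> = a (md x)" by (rule a_int)
  finally show ?thesis using a_base[of "md x"] md_range[of x] by simp
qed

lemma A_surj: "surj A"
proof -
  have "\<exists>x. A x = y" for y
  proof -
    have "A (y - s) \<le> y" using a_b[of "y - s"] by (simp add: a_def)
    moreover have "y \<le> A y" using a_b[of y] by (simp add: a_def)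
    ultimately obtain x where "y - s \<le> x" "x \<le> y" "A x = y"
      using IVT'[of A "y - s" y y] spos smooth_cont[OF smooth_funI2[OF A(2) E_smooth]] by auto
    then show ?thesis by blast
  qed
  then show ?thesis by (metis surjI)
qed

lemma A_inj: "inj A"
  by (rule injI) (metis A_strict linorder_neqE_linordered_idom less_irrefl)

definition Ai :: "real \<Rightarrow> real" where "Ai = inv A"

lemma Ai: "A (Ai y) = y" "Ai (A x) = x"
  unfolding Ai_def using A_surj A_inj by (auto simp: surj_f_inv_f inv_f_f)

lemma A_smooth: "smooth_fun A" by (rule smooth_funI2[OF A(2) E_smooth])

lemma Ai_props: "(deriv ^^ Suc n) Ai = (\<lambda>y. Qf V n (Ai y))" "smooth_fun Ai"
  using inverse_smooth[OF A(2) E_pos V_smooth VE Ai(2) Ai(1)] by auto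

lemma deriv_A: "deriv A = E" by (rule deriv_eqI[OF A(2)])

end

lemma cn_star_le:
  assumes "\<And>i x. i \<le> m \<Longrightarrow> x \<in> {0..1} \<Longrightarrow> \<bar>(deriv ^^ i) g x\<bar> \<le> B"
  shows "cn_star m g \<le> B"
  unfolding cn_star_def
proof (rule cSup_least)
  show "{\<bar>(deriv ^^ i) g x\<bar> |i x. i \<le> m \<and> x \<in> {0..1}} \<noteq> {}" by force
qed (use assms in auto)

lemma rho_terms: "1 \<le> rho m"
  "n < m \<Longrightarrow> 2 * \<bar>Cexp n\<bar> * 100 ^ n \<le> rho m"
  "n < m \<Longrightarrow> \<bar>CQ Cexp n 0\<bar> * 100 ^ n * 2 ^ Suc n \<le> rho m"
proof -
  define t where "t n = 2 * \<bar>Cexp n\<bar> * 100 ^ n + \<bar>CQ Cexp n 0\<bar> * 100 ^ n * 2 ^ Suc n" for n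
  have tn: "0 \<le> t n" for n by (simp add: t_def)
  have r: "rho m = 1 + (\<Sum>n<m. t n)" by (simp add: rho_def t_def)
  have s0: "0 \<le> (\<Sum>n<m. t n)" by (rule sum_nonneg) (use tn in auto)
  then show "1 \<le> rho m" using r by simp
  assume "n < m"
  then have "t n \<le> (\<Sum>n<m. t n)" by (intro member_le_sum) (use tn in auto)
  moreover have "0 \<le> 2 * \<bar>Cexp n\<bar> * 100 ^ n" "0 \<le> \<bar>CQ Cexp n 0\<bar> * 100 ^ n * 2 ^ Suc n" by simp_all
  ultimately show "2 * \<bar>Cexp n\<bar> * 100 ^ n \<le> rho m" "\<bar>CQ Cexp n 0\<bar> * 100 ^ n * 2 ^ Suc n \<le> rho m"
    using r unfolding t_def by linarith+
qed

context cons begin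

lemma E_dbound: "\<bar>(deriv ^^ j) E x\<bar> \<le> Cexp j * kap ^ j * E x"
  using Cexp[OF hypE, of j x] by (simp add: E_def[abs_def])

lemma V_dbound: "\<bar>(deriv ^^ j) V x\<bar> \<le> Cexp j * kap ^ j * V x"
  using Cexp[OF hypV, of j x] by (simp add: V_def[abs_def])

lemma Q_b: "\<bar>Qf V n x\<bar> \<le> CQ Cexp n 0 * kap ^ n * V x ^ Suc n"
proof -
  have "\<bar>(deriv ^^ 0) (Qf V n) x\<bar> \<le> CQ Cexp n 0 * kap ^ (n + 0) * V x ^ Suc n"
    by (rule Qf_bound) (use V_smooth V_pos kap_pos V_dbound in \<open>auto simp: less_imp_le\<close>)
  then show ?thesis by simp
qed

lemma kap_pow: "kap ^ n = 100 ^ n / \<delta> ^ (2*n)"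
  by (simp add: kap_def power_divide power_mult)

lemma tau2: "tau \<le> 2/\<delta>" by (rule tau_le)

lemma A_bound: "\<bar>(deriv ^^ Suc n) A x\<bar> \<le> 2 * \<bar>Cexp n\<bar> * 100 ^ n / \<delta> ^ (2*n+1)"
proof -
  have "(deriv ^^ Suc n) A x = (deriv ^^ n) E x" by (simp only: funpow_deriv_Suc deriv_A)
  moreover have "\<bar>(deriv ^^ n) E x\<bar> \<le> \<bar>Cexp n\<bar> * kap ^ n * E x"
    using E_dbound[of n x] E_pos[of x] kap_pos
    by (smt (verit) mult_right_mono zero_le_power abs_ge_self mult_nonneg_nonneg)
  moreover have "\<bar>Cexp n\<bar> * kap ^ n * E x \<le> \<bar>Cexp n\<bar> * kap ^ n * (2/\<delta>)"
    using E_b(2)[of x] tau2 kap_pos by (intro mult_left_mono) auto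
  moreover have "\<bar>Cexp n\<bar> * kap ^ n * (2/\<delta>) = 2 * \<bar>Cexp n\<bar> * 100 ^ n / \<delta> ^ (2*n+1)"
    using dpos by (simp add: kap_pow field_simps)
  ultimately show ?thesis by linarith
qed

lemma Ai_bound: "\<bar>(deriv ^^ Suc n) Ai y\<bar> \<le> \<bar>CQ Cexp n 0\<bar> * 100 ^ n * 2 ^ Suc n / \<delta> ^ (3*n+1)"
proof -
  have "(deriv ^^ Suc n) Ai y = Qf V n (Ai y)" using Ai_props(1) by simp
  moreover have "\<bar>Qf V n (Ai y)\<bar> \<le> \<bar>CQ Cexp n 0\<bar> * kap ^ n * V (Ai y) ^ Suc n"
    using Q_b[of n "Ai y"] V_pos[of "Ai y"] kap_pos
    by (smt (verit) mult_right_mono zero_le_power abs_ge_self mult_nonneg_nonneg)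
  moreover have "V (Ai y) ^ Suc n \<le> (2/\<delta>) ^ Suc n"
    using V_b[of "Ai y"] tau2 V_pos[of "Ai y"] by (intro power_mono) auto
  then have "\<bar>CQ Cexp n 0\<bar> * kap ^ n * V (Ai y) ^ Suc n \<le> \<bar>CQ Cexp n 0\<bar> * kap ^ n * (2/\<delta>) ^ Suc n"
    using kap_pos by (intro mult_left_mono) auto
  moreover have "\<bar>CQ Cexp n 0\<bar> * kap ^ n * (2/\<delta>) ^ Suc n = \<bar>CQ Cexp n 0\<bar> * 100 ^ n * 2 ^ Suc n / \<delta> ^ (3*n+1)"
    using dpos by (simp add: kap_pow power_divide field_simps flip: power_add)
  ultimately show ?thesis by linarith
qed

lemma div_pow_le:
  assumes "0 \<le> c" "c \<le> r" "e \<le> m"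
  shows "c / \<delta> ^ e \<le> r / \<delta> ^ m"
proof -
  have "\<delta> ^ m \<le> \<delta> ^ e" by (rule power_decreasing) (use assms d1 dpos in auto)
  then have "c / \<delta> ^ e \<le> c / \<delta> ^ m" using assms dpos by (intro divide_left_mono) auto
  also have "\<dots> \<le> r / \<delta> ^ m" using assms dpos by (intro divide_right_mono) auto
  finally show ?thesis .
qed

lemma main:
  assumes hk: "real k * s = 1"
  shows "\<exists>A Ainv a :: real \<Rightarrow> real.
       diffeo01 A Ainv \<and>
       A = (\<lambda>x. x + a x) \<and> smooth_fun a \<and> (\<forall>x. a x \<ge> 0) \<and> (\<forall>x. a (x + s) = a x) \<and>
       A 0 = 0 \<and> A \<delta> = s - \<delta> \<and> A s = s \<and>
       (\<forall>x. \<delta> / (2 * s) \<le> deriv A x \<and> deriv A x \<le> 2 * s / \<delta>) \<and>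
       (\<forall>n. cn_norm n A Ainv \<le> rho n / \<delta> ^ (n\<^sup>2))"
proof (intro exI conjI)
  have A1: "A 1 = 1" using A_per_int[of 0 "int k"] A hk by simp
  have Aunit: "A x \<in> {0..1}" if "x \<in> {0..1}" for x
    using A_mono[of 0 x] A_mono[of x 1] that A A1 by auto
  have Aiunit: "Ai y \<in> {0..1}" if "y \<in> {0..1}" for y
  proof -
    have "\<not> Ai y < 0" using A_strict[of "Ai y" 0] Ai that A by auto
    moreover have "\<not> 1 < Ai y" using A_strict[of 1 "Ai y"] Ai that A1 by auto
    ultimately show ?thesis by auto
  qed
  show "diffeo01 A Ai" unfolding diffeo01_def
    using A_smooth Ai_props(2) Aunit Aiunit Ai by auto
  show "A = (\<lambda>x. x + a x)" by (simp add: a_def fun_eq_iff)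
  show "smooth_fun a" unfolding a_def[abs_def] by (rule smooth_diff[OF A_smooth smooth_id])
  show "\<forall>x. 0 \<le> a x" using a_b by blast
  show "\<forall>x. a (x + s) = a x" using a_per by blast
  show "A 0 = 0" by (rule A(1))
  show "A \<delta> = s - \<delta>" by (rule A_delta)
  show "A s = s" by (rule A_s)
  show "\<forall>x. \<delta> / (2 * s) \<le> deriv A x \<and> deriv A x \<le> 2 * s / \<delta>"
    using E_b inv_tau tau_le2s by (auto simp: deriv_A intro: order_trans)
  show "\<forall>n. cn_norm n A Ai \<le> rho n / \<delta> ^ (n\<^sup>2)"
  proof
    fix m
    have gen: "\<bar>(deriv ^^ i) g x\<bar> \<le> rho m / \<delta> ^ (m\<^sup>2)"
      if g: "g = A \<or> g = Ai" and i: "i \<le> m" and x: "x \<in> {0..1}" for g i x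
    proof (cases i)
      case 0
      have "\<bar>g x\<bar> \<le> 1" using g Aunit[OF x] Aiunit[OF x] by auto
      also have "1 \<le> rho m" by (rule rho_terms(1))
      also have "rho m = rho m / \<delta> ^ 0" by simp
      also have "\<dots> \<le> rho m / \<delta> ^ (m\<^sup>2)"
        by (rule div_pow_le) (use rho_terms(1)[of m] in auto)
      finally show ?thesis using 0 by simp
    next
      case (Suc n)
      have nm: "n < m" using Suc i by simp
      have sq: "Suc n * Suc n \<le> m\<^sup>2" using mult_le_mono[of "Suc n" m "Suc n" m] nm
        by (simp add: power2_eq_square)
      have e1: "2*n+1 \<le> m\<^sup>2" using sq by simp
      have nn: "n \<le> n * n" by (rule le_square)
      have e2: "3*n+1 \<le> m\<^sup>2" using sq nn by (simp only: mult_Suc mult_Suc_right)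
      show ?thesis
      proof (cases "g = A")
        case True
        have "\<bar>(deriv ^^ Suc n) A x\<bar> \<le> 2 * \<bar>Cexp n\<bar> * 100 ^ n / \<delta> ^ (2*n+1)" by (rule A_bound)
        also have "\<dots> \<le> rho m / \<delta> ^ (m\<^sup>2)"
          by (rule div_pow_le) (use rho_terms(2)[OF nm] e1 in auto)
        finally show ?thesis using True Suc by simp
      next
        case False
        then have gi: "g = Ai" using g by simp
        have "\<bar>(deriv ^^ Suc n) Ai x\<bar> \<le> \<bar>CQ Cexp n 0\<bar> * 100 ^ n * 2 ^ Suc n / \<delta> ^ (3*n+1)"
          by (rule Ai_bound)
        also have "\<dots> \<le> rho m / \<delta> ^ (m\<^sup>2)"
          by (rule div_pow_le) (use rho_terms(3)[OF nm] e2 in auto)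
        finally show ?thesis using gi Suc by simp
      qed
    qed
    have "cn_star m A \<le> rho m / \<delta> ^ (m\<^sup>2)" by (rule cn_star_le) (rule gen, auto)
    moreover have "cn_star m Ai \<le> rho m / \<delta> ^ (m\<^sup>2)" by (rule cn_star_le) (rule gen, auto)
    ultimately show "cn_norm m A Ai \<le> rho m / \<delta> ^ (m\<^sup>2)" by (simp add: cn_norm_def)
  qed
qed

end

theorem lemma3p3:
  shows "\<exists>\<rho> :: nat \<Rightarrow> real. \<forall>s \<delta> :: real.
    s > 0 \<and> \<delta> > 0 \<and> (\<exists>k::nat. 1 / s = real k) \<and> \<delta> < s / 2 \<longrightarrow>
    (\<exists>A Ainv a :: real \<Rightarrow> real.
       diffeo01 A Ainv \<and>
       A = (\<lambda>x. x + a x) \<and> smooth_fun a \<and> (\<forall>x. a x \<ge> 0) \<and> (\<forall>x. a (x + s) = a x) \<and>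
       A 0 = 0 \<and> A \<delta> = s - \<delta> \<and> A s = s \<and>
       (\<forall>x. \<delta> / (2 * s) \<le> deriv A x \<and> deriv A x \<le> 2 * s / \<delta>) \<and>
       (\<forall>n. cn_norm n A Ainv \<le> \<rho> n / \<delta> ^ (n\<^sup>2)))"
proof (intro exI[of _ rho] allI impI)
  fix s \<delta> :: real
  assume h: "s > 0 \<and> \<delta> > 0 \<and> (\<exists>k::nat. 1 / s = real k) \<and> \<delta> < s / 2"
  then obtain k :: nat where k: "1 / s = real k" by blast
  have ks: "real k * s = 1" using k h by (simp add: field_simps)
  have "k \<noteq> 0" using ks by (metis mult_zero_left of_nat_0 zero_neq_one)
  then have "1 \<le> real k" by simp
  then have s1: "s \<le> 1" using ks h by (metis mult_le_cancel_right1 order.strict_iff_not)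
  interpret cons s \<delta> by unfold_locales (use h s1 in auto)
  show "\<exists>A Ainv a :: real \<Rightarrow> real.
       diffeo01 A Ainv \<and>
       A = (\<lambda>x. x + a x) \<and> smooth_fun a \<and> (\<forall>x. a x \<ge> 0) \<and> (\<forall>x. a (x + s) = a x) \<and>
       A 0 = 0 \<and> A \<delta> = s - \<delta> \<and> A s = s \<and>
       (\<forall>x. \<delta> / (2 * s) \<le> deriv A x \<and> deriv A x \<le> 2 * s / \<delta>) \<and>
       (\<forall>n. cn_norm n A Ainv \<le> rho n / \<delta> ^ (n\<^sup>2))"
    by (rule main[OF ks])
qed

end
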